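(* Let $G_m$ be a parametric regulatory network with a well-formed set of influence constraints $R$, and let $\pi$ be a finite sequence of transitions in $\Delta(G_m)$, with $\tilde\pi$ the set of its transitions. Then $p^\#_R(\tilde\pi)\neq\varnothing$ if and only if $p_R(\tilde\pi)\neq\emptyset$.
   Context: An influence graph is $G=(V,I)$ with $V=\{1,\dots,n\}$, $I\subseteq V\times V$; regulators $n^-(v)=\{u\mid(u,v)\in I\}$. $m\in\mathbb N^n$, $D_v=\{0,\dots,m_v\}$, PRN $G_m=(G,m)$. Regulator states $\Omega_v=\prod_{u\in n^-(v)}D_u$; $\omega[u\leftarrow k]$ replaces component $u$ of $\omega$ by $k$. Parametrisations: $P\in\mathbb P(G_m)=\prod_{\langle v,\omega\rangle,\ \omega\in\Omega_v}D_v$, coordinates $P_{v,\omega}$, componentwise order, $\bot$ the zero vector, $\top_{v,\omega}=m_v$; $(L,U)$ denotes $\{P\mid L\le P\le U\}$, the empty lattice $\varnothing$ if $L\not\le U$. States $\prod_vD_v$; $\omega_v(x)$ projects $x$ onto the regulators of $v$. Transitions $x\xrightarrow{v,+}y$ ($y=x$ except $y_v=x_v+1\le m_v$) and $x\xrightarrow{v,-}y$ ($y_v=x_v-1\ge0$). $\mathcal P_{x\xrightarrow{v,+}y}=\{P\mid P_{v,\omega_v(x)}\ge x_v+1\}$, $\mathcal P_{x\xrightarrow{v,-}y}=\{P\mid P_{v,\omega_v(x)}\le x_v-1\}$; $p(\emptyset)=\mathbb P(G_m)$, $p(T)=\bigcap_{t\in T}\mathcal P_t$. $R\subseteq V\times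 V\times\{+1,-1,\mathrm o\}$ is well-formed if $u\in n^-(v)$ for all $(u,v,c)\in R$ and never both $(u,v,+1),(u,v,-1)\in R$. $\mathcal P_{(u,v,+1)}=\{P\mid\forall\omega\in\Omega_v\forall x_u\in\{1..m_u\}:P_{v,\omega[u\leftarrow x_u]}\ge P_{v,\omega[u\leftarrow x_u-1]}\}$, $\mathcal P_{(u,v,-1)}$ likewise with $\le$, $\mathcal P_{(u,v,\mathrm o)}=\{P\mid\exists\omega\in\Omega_v\exists x_u\in\{1..m_u\}:P_{v,\omega[u\leftarrow x_u]}\ne P_{v,\omega[u\leftarrow x_u-1]}\}$; $p_R(T)=p(T)\cap\bigcap_{r\in R}\mathcal P_r$. Order $\preceq_v$ on $\Omega_v$: $\omega\preceq_v\omega'$ iff for all $u\in n^-(v)$, $\omega_u\le\omega'_u$ if $(u,v,+1)\in R$, $\omega_u\ge\omega'_u$ if $(u,v,-1)\in R$, $\omega_u=\omega'_u$ otherwise; $\parallel_v$ means incomparable. Narrowings (mapping $\varnothing$ to $\varnothing$): $\nabla_{x\xrightarrow{v,+}y}(L,U)=(\max(L,\bot[(v,\omega_v(x))\leftarrow x_v+1]),U)$, $\nabla_{x\xrightarrow{v,-}y}(L,U)=(L,\min(U,\top[(v,\omega_v(x))\leftarrow x_v-1]))$. For $s=\pm1$, $\nabla_{(u,v,s)}(L,U)$ is the fixpoint of iterating $f(L,U)=(L',U')$ with $L'_{v,\omega}=\max(\{L_{v,\omega}\}\cup\{L_{v,\omega[u\leftarrow\omega_u-s]}\mid\omega_u-s\in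 D_u\})$, $U'_{v,\omega}=\min(\{U_{v,\omega}\}\cup\{U_{v,\omega[u\leftarrow\omega_u+s]}\mid\omega_u+s\in D_u\})$, other coordinates unchanged. $A=A_{u,v}(L,U)=\{\omega\in\Omega_v\mid\exists x_u\in\{1..m_u\}: L_{v,\omega[u\leftarrow x_u]}<U_{v,\omega[u\leftarrow x_u-1]}\vee U_{v,\omega[u\leftarrow x_u]}>L_{v,\omega[u\leftarrow x_u-1]}\}$; $\nabla_{(u,v,\mathrm o)}(L,U)=\varnothing$ if $A=\emptyset$, else $(L',U')$ with $L'=L$ plus 1 at $(v,\omega)$ if $\overline B=\{\omega\}$ (else $L'=L$), $U'=U$ minus 1 at $(v,\omega)$ if $\underline B=\{\omega\}$ (else $U'=U$), where $\overline B=\{\omega\in A\mid L_{v,\omega}<U_{v,\omega}\wedge\forall\omega'\in A:L_{v,\omega}=L_{v,\omega'}\wedge(\omega'\preceq_v\omega\vee\omega\parallel_v\omega')\}$, $\underline B=\{\omega\in A\mid L_{v,\omega}<U_{v,\omega}\wedge\forall\omega'\in A:U_{v,\omega}=U_{v,\omega'}\wedge(\omega\preceq_v\omega'\vee\omega\parallel_v\omega')\}$. $\nabla_{R'}$ is the fixpoint of iterating the composition of $\nabla_r$, $r\in R'$. $p^\#_R(\emptyset)=\nabla_R(\bot,\top)$, $p^\#_R(T\cup\{t\})=\nabla_{\{(u,v',c)\in R\mid v'=v\}}(\nabla_t(p^\#_R(T)))$ where $v$ is the node changed by $t$. *)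

theory Defs
  imports Main
begin

(* Vertices are the natural numbers 1..n; influence graph I \<subseteq> V \<times> V; m v = maximal level of v. *)

datatype sgn = SPlus | SMinus | SObs
datatype dir = Inc | Dec

type_synonym state = "nat \<Rightarrow> nat"
type_synonym param = "nat \<Rightarrow> (nat \<Rightarrow> nat) \<Rightarrow> nat"
(* transition x --(v,Inc)--> y  or  x --(v,Dec)--> y, represented by (x, v, direction) *)
type_synonym trans = "state \<times> nat \<times> dir"
type_synonym constr = "nat \<times> nat \<times> sgn"
(* None = the empty lattice; Some (L,U) with L \<le> U *)
type_synonym lat = "(param \<times> param) option"

definition regs :: "(nat \<times> nat) set \<Rightarrow> nat \<Rightarrow> nat set" where
  "regs I v = {u. (u, v) \<in> I}"

definition Omega :: "(nat \<times> nat) set \<Rightarrow> (nat \<Rightarrow> nat) \<Rightarrow> nat \<Rightarrow> (nat \<Rightarrow> nat) set" where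
  "Omega I m v = {\<omega>. (\<forall>u\<in>regs I v. \<omega> u \<le> m u) \<and> (\<forall>u. u \<notin> regs I v \<longrightarrow> \<omega> u = 0)}"

definition is_coord :: "nat \<Rightarrow> (nat \<times> nat) set \<Rightarrow> (nat \<Rightarrow> nat) \<Rightarrow> nat \<Rightarrow> (nat \<Rightarrow> nat) \<Rightarrow> bool" where
  "is_coord n I m v \<omega> \<longleftrightarrow> v \<in> {1..n} \<and> \<omega> \<in> Omega I m v"

definition params :: "nat \<Rightarrow> (nat \<times> nat) set \<Rightarrow> (nat \<Rightarrow> nat) \<Rightarrow> param set" where
  "params n I m = {P. \<forall>v \<omega>. (is_coord n I m v \<omega> \<longrightarrow> P v \<omega> \<le> m v)
                              \<and> (\<not> is_coord n I m v \<omega> \<longrightarrow> P v \<omega> = 0)}"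

definition pbot :: param where
  "pbot = (\<lambda>v \<omega>. 0)"

definition ptop :: "nat \<Rightarrow> (nat \<times> nat) set \<Rightarrow> (nat \<Rightarrow> nat) \<Rightarrow> param" where
  "ptop n I m = (\<lambda>v \<omega>. if is_coord n I m v \<omega> then m v else 0)"

definition states :: "nat \<Rightarrow> (nat \<Rightarrow> nat) \<Rightarrow> state set" where
  "states n m = {x. (\<forall>v\<in>{1..n}. x v \<le> m v) \<and> (\<forall>v. v \<notin> {1..n} \<longrightarrow> x v = 0)}"

definition omega_of :: "(nat \<times> nat) set \<Rightarrow> nat \<Rightarrow> state \<Rightarrow> (nat \<Rightarrow> nat)" where
  "omega_of I v x = (\<lambda>u. if u \<in> regs I v then x u else 0)"

definition is_trans :: "nat \<Rightarrow> (nat \<Rightarrow> nat) \<Rightarrow> trans \<Rightarrow> bool" where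
  "is_trans n m t = (case t of (x, v, d) \<Rightarrow> x \<in> states n m \<and> v \<in> {1..n} \<and>
       (case d of Inc \<Rightarrow> x v + 1 \<le> m v | Dec \<Rightarrow> 1 \<le> x v))"

definition tnode :: "trans \<Rightarrow> nat" where
  "tnode t = fst (snd t)"

definition Ptrans :: "nat \<Rightarrow> (nat \<times> nat) set \<Rightarrow> (nat \<Rightarrow> nat) \<Rightarrow> trans \<Rightarrow> param set" where
  "Ptrans n I m t = (case t of
      (x, v, Inc) \<Rightarrow> {P \<in> params n I m. P v (omega_of I v x) \<ge> x v + 1}
    | (x, v, Dec) \<Rightarrow> {P \<in> params n I m. P v (omega_of I v x) \<le> x v - 1})"

definition pT :: "nat \<Rightarrow> (nat \<times> nat) set \<Rightarrow> (nat \<Rightarrow> nat) \<Rightarrow> trans set \<Rightarrow> param set" where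
  "pT n I m T = params n I m \<inter> (\<Inter>t\<in>T. Ptrans n I m t)"

definition wellformed :: "(nat \<times> nat) set \<Rightarrow> constr list \<Rightarrow> bool" where
  "wellformed I R \<longleftrightarrow> (\<forall>(u, v, c) \<in> set R. u \<in> regs I v)
     \<and> \<not> (\<exists>u v. (u, v, SPlus) \<in> set R \<and> (u, v, SMinus) \<in> set R)"

definition Pconstr :: "nat \<Rightarrow> (nat \<times> nat) set \<Rightarrow> (nat \<Rightarrow> nat) \<Rightarrow> constr \<Rightarrow> param set" where
  "Pconstr n I m r = (case r of
      (u, v, SPlus) \<Rightarrow> {P \<in> params n I m. \<forall>\<omega>\<in>Omega I m v. \<forall>k\<in>{1..m u}.
                           P v (\<omega>(u := k)) \<ge> P v (\<omega>(u := k - 1))}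
    | (u, v, SMinus) \<Rightarrow> {P \<in> params n I m. \<forall>\<omega>\<in>Omega I m v. \<forall>k\<in>{1..m u}.
                           P v (\<omega>(u := k)) \<le> P v (\<omega>(u := k - 1))}
    | (u, v, SObs) \<Rightarrow> {P \<in> params n I m. \<exists>\<omega>\<in>Omega I m v. \<exists>k\<in>{1..m u}.
                           P v (\<omega>(u := k)) \<noteq> P v (\<omega>(u := k - 1))})"

definition pR :: "nat \<Rightarrow> (nat \<times> nat) set \<Rightarrow> (nat \<Rightarrow> nat) \<Rightarrow> constr list \<Rightarrow> trans set \<Rightarrow> param set" where
  "pR n I m R T = pT n I m T \<inter> (\<Inter>r\<in>set R. Pconstr n I m r)"

definition prec :: "(nat \<times> nat) set \<Rightarrow> constr list \<Rightarrow> nat \<Rightarrow> (nat \<Rightarrow> nat) \<Rightarrow> (nat \<Rightarrow> nat) \<Rightarrow> bool" where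
  "prec I R v \<omega> \<omega>' \<longleftrightarrow> (\<forall>u\<in>regs I v.
      (if (u, v, SPlus) \<in> set R then \<omega> u \<le> \<omega>' u
       else if (u, v, SMinus) \<in> set R then \<omega> u \<ge> \<omega>' u
       else \<omega> u = \<omega>' u))"

definition incomp :: "(nat \<times> nat) set \<Rightarrow> constr list \<Rightarrow> nat \<Rightarrow> (nat \<Rightarrow> nat) \<Rightarrow> (nat \<Rightarrow> nat) \<Rightarrow> bool" where
  "incomp I R v \<omega> \<omega>' \<longleftrightarrow> \<not> prec I R v \<omega> \<omega>' \<and> \<not> prec I R v \<omega>' \<omega>"

definition mk :: "param \<Rightarrow> param \<Rightarrow> lat" where
  "mk L U = (if L \<le> U then Some (L, U) else None)"

definition fixp :: "('a \<Rightarrow> 'a) \<Rightarrow> 'a \<Rightarrow> 'a" where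
  "fixp f x = (f ^^ (LEAST k. f ((f ^^ k) x) = (f ^^ k) x)) x"

definition nabla_t :: "nat \<Rightarrow> (nat \<times> nat) set \<Rightarrow> (nat \<Rightarrow> nat) \<Rightarrow> trans \<Rightarrow> lat \<Rightarrow> lat" where
  "nabla_t n I m t lt = (case lt of None \<Rightarrow> None | Some (L, U) \<Rightarrow>
     (case t of
        (x, v, Inc) \<Rightarrow> mk (sup L (pbot(v := (pbot v)(omega_of I v x := x v + 1)))) U
      | (x, v, Dec) \<Rightarrow> mk L (inf U ((ptop n I m)(v := (ptop n I m v)(omega_of I v x := x v - 1))))))"

definition shift :: "sgn \<Rightarrow> int" where
  "shift s = (case s of SPlus \<Rightarrow> 1 | SMinus \<Rightarrow> -1 | SObs \<Rightarrow> 0)"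

definition infl_step :: "nat \<Rightarrow> (nat \<times> nat) set \<Rightarrow> (nat \<Rightarrow> nat) \<Rightarrow> nat \<Rightarrow> nat \<Rightarrow> sgn \<Rightarrow> lat \<Rightarrow> lat" where
  "infl_step n I m u v s lt = (case lt of None \<Rightarrow> None | Some (L, U) \<Rightarrow>
     mk (\<lambda>v' \<omega>. if v' = v \<and> is_coord n I m v \<omega> then
            Max ({L v \<omega>} \<union>
                 (if 0 \<le> int (\<omega> u) - shift s \<and> int (\<omega> u) - shift s \<le> int (m u)
                  then {L v (\<omega>(u := nat (int (\<omega> u) - shift s)))} else {}))
          else L v' \<omega>)
        (\<lambda>v' \<omega>. if v' = v \<and> is_coord n I m v \<omega> then
            Min ({U v \<omega>} \<union>
                 (if 0 \<le> int (\<omega> u) + shift s \<and> int (\<omega> u) + shift s \<le> int (m u)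
                  then {U v (\<omega>(u := nat (int (\<omega> u) + shift s)))} else {}))
          else U v' \<omega>))"

definition nabla_obs :: "nat \<Rightarrow> (nat \<times> nat) set \<Rightarrow> (nat \<Rightarrow> nat) \<Rightarrow> constr list \<Rightarrow> nat \<Rightarrow> nat \<Rightarrow> lat \<Rightarrow> lat" where
  "nabla_obs n I m R u v lt = (case lt of None \<Rightarrow> None | Some (L, U) \<Rightarrow>
     (let A = {\<omega> \<in> Omega I m v. \<exists>k\<in>{1..m u}.
                 L v (\<omega>(u := k)) < U v (\<omega>(u := k - 1)) \<or> U v (\<omega>(u := k)) > L v (\<omega>(u := k - 1))};
          Bo = {\<omega> \<in> A. L v \<omega> < U v \<omega> \<and>
                 (\<forall>\<omega>'\<in>A. L v \<omega> = L v \<omega>' \<and> (prec I R v \<omega>' \<omega> \<or> incomp I R v \<omega> \<omega>'))};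
          Bu = {\<omega> \<in> A. L v \<omega> < U v \<omega> \<and>
                 (\<forall>\<omega>'\<in>A. U v \<omega> = U v \<omega>' \<and> (prec I R v \<omega> \<omega>' \<or> incomp I R v \<omega> \<omega>'))};
          L' = (if \<exists>\<omega>. Bo = {\<omega>} then L(v := (L v)(the_elem Bo := L v (the_elem Bo) + 1)) else L);
          U' = (if \<exists>\<omega>. Bu = {\<omega>} then U(v := (U v)(the_elem Bu := U v (the_elem Bu) - 1)) else U)
      in if A = {} then None else mk L' U'))"

definition nabla_r :: "nat \<Rightarrow> (nat \<times> nat) set \<Rightarrow> (nat \<Rightarrow> nat) \<Rightarrow> constr list \<Rightarrow> constr \<Rightarrow> lat \<Rightarrow> lat" where
  "nabla_r n I m R r = (case r of
      (u, v, SObs) \<Rightarrow> nabla_obs n I m R u v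
    | (u, v, s) \<Rightarrow> fixp (infl_step n I m u v s))"

definition nabla_set :: "nat \<Rightarrow> (nat \<times> nat) set \<Rightarrow> (nat \<Rightarrow> nat) \<Rightarrow> constr list \<Rightarrow> constr list \<Rightarrow> lat \<Rightarrow> lat" where
  "nabla_set n I m R R' = fixp (fold (\<lambda>r f. nabla_r n I m R r \<circ> f) R' id)"

definition psharp :: "nat \<Rightarrow> (nat \<times> nat) set \<Rightarrow> (nat \<Rightarrow> nat) \<Rightarrow> constr list \<Rightarrow> trans list \<Rightarrow> lat" where
  "psharp n I m R \<pi> = fold (\<lambda>t lt. nabla_set n I m R (filter (\<lambda>(u, v', c). v' = tnode t) R) (nabla_t n I m t lt))
        (remdups \<pi>) (nabla_set n I m R R (Some (pbot, ptop n I m)))"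

end

theory Submission imports Defs begin

locale ctx =
  fixes n :: nat and I :: "(nat \<times> nat) set" and m :: "nat \<Rightarrow> nat" and R :: "constr list"
  assumes Isub: "I \<subseteq> {1..n} \<times> {1..n}" and wf: "wellformed I R"
begin

definition valid :: "lat \<Rightarrow> bool" where
  "valid x = (case x of None \<Rightarrow> True | Some (L, U) \<Rightarrow> L \<le> U \<and> U \<le> ptop n I m)"

definition lel :: "lat \<Rightarrow> lat \<Rightarrow> bool" where
  "lel a b = (case a of None \<Rightarrow> True | Some (L', U') \<Rightarrow>
      (case b of None \<Rightarrow> False | Some (L, U) \<Rightarrow> L \<le> L' \<and> U' \<le> U))"

definition goodf :: "(lat \<Rightarrow> lat) \<Rightarrow> bool" where
  "goodf g = (g None = None \<and> (\<forall>x. valid x \<longrightarrow> valid (g x) \<and> lel (g x) x))"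

definition sameoff :: "nat \<Rightarrow> lat \<Rightarrow> lat \<Rightarrow> bool" where
  "sameoff v a b = (\<forall>L' U' L U. a = Some (L', U') \<longrightarrow> b = Some (L, U) \<longrightarrow>
      (\<forall>w. w \<noteq> v \<longrightarrow> L' w = L w \<and> U' w = U w))"

definition loc :: "nat \<Rightarrow> (lat \<Rightarrow> lat) \<Rightarrow> bool" where
  "loc v g = (\<forall>x. valid x \<longrightarrow> sameoff v (g x) x)"

definition inbox :: "param \<Rightarrow> lat \<Rightarrow> bool" where
  "inbox P x = (\<exists>L U. x = Some (L, U) \<and> L \<le> P \<and> P \<le> U)"

definition sound :: "param \<Rightarrow> (lat \<Rightarrow> lat) \<Rightarrow> bool" where
  "sound P g = (\<forall>x. inbox P x \<longrightarrow> inbox P (g x))"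

lemma lel_refl: "lel x x"
  by (auto simp: lel_def split: option.splits)

lemma lel_trans: "lel a b \<Longrightarrow> lel b c \<Longrightarrow> lel a c"
  by (auto simp: lel_def split: option.splits intro: order_trans)

lemma lel_antisym: "lel a b \<Longrightarrow> lel b a \<Longrightarrow> a = b"
  by (auto simp: lel_def split: option.splits intro: order_antisym)

lemma lel_None: "lel a None \<Longrightarrow> a = None"
  by (auto simp: lel_def split: option.splits)

lemma sameoff_refl: "sameoff v x x"
  by (auto simp: sameoff_def)

lemma sameoff_trans: "sameoff v a b \<Longrightarrow> sameoff v b c \<Longrightarrow> lel a b \<Longrightarrow> sameoff v a c"
  unfolding sameoff_def lel_def by (auto split: option.splits)

lemma goodf_id: "goodf id"
  by (auto simp: goodf_def lel_refl)

lemma goodf_comp: "goodf g \<Longrightarrow> goodf h \<Longrightarrow> goodf (g \<circ> h)"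
  unfolding goodf_def by (auto intro: lel_trans)

lemma goodf_pow: "goodf g \<Longrightarrow> goodf (g ^^ k)"
  by (induction k) (auto simp: goodf_id goodf_comp)

lemma fixp_iter: "\<exists>k. fixp f x = (f ^^ k) x"
  by (auto simp: fixp_def)

lemma goodf_fixp: assumes "goodf g" shows "goodf (fixp g)"
proof -
  have "(g ^^ k) None = None" for k using goodf_pow[OF assms, of k] by (simp add: goodf_def)
  moreover have "valid (fixp g x) \<and> lel (fixp g x) x" if "valid x" for x
    using fixp_iter[of g x] goodf_pow[OF assms] that unfolding goodf_def by metis
  ultimately show ?thesis unfolding goodf_def fixp_def by auto
qed

lemma loc_id: "loc v id" by (simp add: loc_def sameoff_refl)

lemma loc_comp: assumes "goodf h" "goodf g" "loc v g" "loc v h" shows "loc v (g \<circ> h)"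
  unfolding loc_def
proof (intro allI impI)
  fix x assume x: "valid x"
  have hx: "valid (h x)" "lel (h x) x" using assms(1) x by (auto simp: goodf_def)
  have gN: "g None = None" using assms(2) by (simp add: goodf_def)
  have s1: "sameoff v (g (h x)) (h x)" using assms(3) hx by (simp add: loc_def)
  have s2: "sameoff v (h x) x" using assms(4) x by (simp add: loc_def)
  show "sameoff v ((g \<circ> h) x) x"
  proof (cases "h x")
    case None
    then show ?thesis using gN by (simp add: sameoff_def)
  next
    case (Some p)
    have "lel (g (h x)) (h x)" using assms(2) hx by (simp add: goodf_def)
    then show ?thesis using sameoff_trans[OF s1 s2] hx
      unfolding sameoff_def lel_def by (cases "x"; cases p) auto
  qed
qed

lemma loc_pow: "goodf g \<Longrightarrow> loc v g \<Longrightarrow> loc v (g ^^ k)"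
proof (induction k)
  case 0 then show ?case by (simp add: loc_id[unfolded id_def])
next
  case (Suc k)
  have "loc v (g \<circ> g ^^ k)" using loc_comp[OF goodf_pow[OF Suc.prems(1), of k]] Suc by simp
  then show ?case by (simp only: funpow.simps(2))
qed

lemma loc_fixp: "goodf g \<Longrightarrow> loc v g \<Longrightarrow> loc v (fixp g)"
  using loc_pow fixp_iter unfolding loc_def by metis

lemma sound_id: "sound P id" by (simp add: sound_def)
lemma sound_comp: "sound P g \<Longrightarrow> sound P h \<Longrightarrow> sound P (g \<circ> h)"
  by (simp add: sound_def)
lemma sound_pow: "sound P g \<Longrightarrow> sound P (g ^^ k)"
  by (induction k) (auto simp: sound_def)
lemma sound_fixp: "sound P g \<Longrightarrow> sound P (fixp g)"
  using sound_pow fixp_iter unfolding sound_def by metis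

lemma inbox_not_None: "inbox P x \<Longrightarrow> x \<noteq> None"
  by (auto simp: inbox_def)

lemma regs_sub: "regs I v \<subseteq> {1..n}"
  using Isub by (auto simp: regs_def)

lemma finite_regs: "finite (regs I v)"
  using regs_sub finite_subset by blast

lemma finite_Omega: "finite (Omega I m v)"
proof -
  define B where "B = {0..Max (m ` {1..n})}"
  have "Omega I m v \<subseteq> {f. \<forall>x. (x \<in> {1..n} \<longrightarrow> f x \<in> B) \<and> (x \<notin> {1..n} \<longrightarrow> f x = 0)}"
  proof
    fix f assume "f \<in> Omega I m v"
    then have h: "\<forall>u\<in>regs I v. f u \<le> m u" "\<forall>u. u \<notin> regs I v \<longrightarrow> f u = 0"
      by (auto simp: Omega_def)
    show "f \<in> {f. \<forall>x. (x \<in> {1..n} \<longrightarrow> f x \<in> B) \<and> (x \<notin> {1..n} \<longrightarrow> f x = 0)}"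
    proof (simp only: mem_Collect_eq, intro allI conjI impI)
      fix x assume x: "x \<in> {1..n}"
      have "m x \<le> Max (m ` {1..n})" using x by simp
      moreover have "f x \<le> m x" using h x by (cases "x \<in> regs I v") auto
      ultimately show "f x \<in> B" unfolding B_def by simp
    next
      fix x assume "x \<notin> {1..n}"
      then show "f x = 0" using h regs_sub by blast
    qed
  qed
  moreover have "finite {f. \<forall>x. (x \<in> {1..n} \<longrightarrow> f x \<in> B) \<and> (x \<notin> {1..n} \<longrightarrow> f x = (0::nat))}"
    by (rule finite_set_of_finite_funs) (auto simp: B_def)
  ultimately show ?thesis using finite_subset by blast
qed

definition C :: "(nat \<times> (nat \<Rightarrow> nat)) set" where
  "C = Sigma {1..n} (Omega I m)"

lemma finite_C: "finite C"
  unfolding C_def using finite_Omega by auto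

lemma coord_C: "is_coord n I m v w \<longleftrightarrow> (v, w) \<in> C"
  by (auto simp: C_def is_coord_def)

definition msum :: "param \<Rightarrow> param \<Rightarrow> nat" where
  "msum L U = (\<Sum>p\<in>C. U (fst p) (snd p) - L (fst p) (snd p))"

definition meas :: "lat \<Rightarrow> nat" where
  "meas x = (case x of None \<Rightarrow> 0 | Some (L, U) \<Rightarrow> Suc (msum L U))"

lemma le2: "(L::param) \<le> L' \<Longrightarrow> L a b \<le> L' a b"
  by (simp add: le_fun_def)

lemma valid_off: "valid (Some (L, U)) \<Longrightarrow> \<not> is_coord n I m v w \<Longrightarrow> L v w = 0 \<and> U v w = 0"
proof -
  assume a: "valid (Some (L, U))" "\<not> is_coord n I m v w"
  have "U \<le> ptop n I m" "L \<le> U" using a(1) by (auto simp: valid_def)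
  then have "U v w \<le> ptop n I m v w" "L v w \<le> U v w" by (auto dest: le2)
  then show ?thesis using a(2) by (simp add: ptop_def)
qed


lemma diff_lt_aux: "(a::nat) \<le> a' \<Longrightarrow> b' \<le> b \<Longrightarrow> a' \<le> b' \<Longrightarrow> a < a' \<or> b' < b \<Longrightarrow> b' - a' < b - a"
  by linarith

lemma meas_dec:
  assumes "valid x" "valid y" "lel y x" "y \<noteq> x"
  shows "meas y < meas x"
proof (cases y)
  case None
  then show ?thesis using assms by (cases x) (auto simp: meas_def)
next
  case (Some p)
  then obtain L' U' where y: "y = Some (L', U')" by (cases p) auto
  then obtain L U where x: "x = Some (L, U)" using assms(3)
    by (cases x) (auto simp: lel_def)
  have le: "L \<le> L'" "U' \<le> U" using assms(3) x y by (auto simp: lel_def)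
  have v1: "L \<le> U" "L' \<le> U'" using assms(1,2) x y by (auto simp: valid_def)
  have "\<exists>p\<in>C. L' (fst p) (snd p) \<noteq> L (fst p) (snd p) \<or> U' (fst p) (snd p) \<noteq> U (fst p) (snd p)"
  proof (rule ccontr)
    assume nt: "\<not> ?thesis"
    have eq: "L' v w = L v w \<and> U' v w = U v w" if "(v, w) \<in> C" for v w
    proof -
      have "\<not> (L' (fst (v,w)) (snd (v,w)) \<noteq> L (fst (v,w)) (snd (v,w)) \<or> U' (fst (v,w)) (snd (v,w)) \<noteq> U (fst (v,w)) (snd (v,w)))"
        using nt that by blast
      then show ?thesis by simp
    qed
    have "L' v w = L v w \<and> U' v w = U v w" for v w
    proof (cases "(v, w) \<in> C")
      case True then show ?thesis using eq by blast
    next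
      case False
      then show ?thesis using valid_off[OF assms(1)[unfolded x], of v w] valid_off[OF assms(2)[unfolded y], of v w]
        by (simp add: coord_C)
    qed
    then have "L' = L \<and> U' = U" by (simp add: fun_eq_iff)
    then show False using assms(4) x y by simp
  qed
  then obtain p where p: "p \<in> C" "L' (fst p) (snd p) \<noteq> L (fst p) (snd p) \<or> U' (fst p) (snd p) \<noteq> U (fst p) (snd p)" by blast
  have "(\<Sum>p\<in>C. U' (fst p) (snd p) - L' (fst p) (snd p)) < (\<Sum>p\<in>C. U (fst p) (snd p) - L (fst p) (snd p))"
  proof (rule sum_strict_mono_ex1[OF finite_C])
    show "\<forall>q\<in>C. U' (fst q) (snd q) - L' (fst q) (snd q) \<le> U (fst q) (snd q) - L (fst q) (snd q)"
    proof
      fix q assume "q \<in> C"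
      have "L (fst q) (snd q) \<le> L' (fst q) (snd q)" "U' (fst q) (snd q) \<le> U (fst q) (snd q)"
        using le2[OF le(1)] le2[OF le(2)] by auto
      then show "U' (fst q) (snd q) - L' (fst q) (snd q) \<le> U (fst q) (snd q) - L (fst q) (snd q)"
        by linarith
    qed
    have "L (fst p) (snd p) \<le> L' (fst p) (snd p)" "U' (fst p) (snd p) \<le> U (fst p) (snd p)"
      "L' (fst p) (snd p) \<le> U' (fst p) (snd p)"
      using le2[OF le(1)] le2[OF le(2)] le2[OF v1(2)] by auto
    note hh = this
    have "L (fst p) (snd p) < L' (fst p) (snd p) \<or> U' (fst p) (snd p) < U (fst p) (snd p)"
      using p(2) hh(1,2) by linarith
    then have "U' (fst p) (snd p) - L' (fst p) (snd p) < U (fst p) (snd p) - L (fst p) (snd p)"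
      using diff_lt_aux[OF hh] by blast
    then show "\<exists>q\<in>C. U' (fst q) (snd q) - L' (fst q) (snd q) < U (fst q) (snd q) - L (fst q) (snd q)"
      using p(1) by blast
  qed
  then have "msum L' U' < msum L U" unfolding msum_def .
  then show ?thesis using x y by (simp add: meas_def)
qed

lemma terminates:
  assumes g: "goodf f" shows "valid x \<Longrightarrow> \<exists>k. f ((f ^^ k) x) = (f ^^ k) x"
proof (induction "meas x" arbitrary: x rule: less_induct)
  case less
  show ?case
  proof (cases "f x = x")
    case True then show ?thesis by (intro exI[of _ 0]) simp
  next
    case False
    have v: "valid (f x)" "lel (f x) x" using g less.prems by (auto simp: goodf_def)
    then have "meas (f x) < meas x" using meas_dec less.prems False by blast
    then obtain k where a: "f ((f ^^ k) (f x)) = (f ^^ k) (f x)" using less.hyps v by blast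
    have b: "(f ^^ Suc k) x = (f ^^ k) (f x)" by (simp only: funpow_Suc_right o_apply)
    show ?thesis by (intro exI[of _ "Suc k"]) (simp only: b a)
  qed
qed

lemma fixp_fixed:
  assumes "goodf f" "valid x" shows "f (fixp f x) = fixp f x"
  unfolding fixp_def using terminates[OF assms] by (rule LeastI_ex)


lemma le2I: "(\<And>v w. (F::param) v w \<le> G v w) \<Longrightarrow> F \<le> G"
  by (simp add: le_fun_def)

lemma mk_Some: "L \<le> U \<Longrightarrow> mk L U = Some (L, U)"
  by (simp add: mk_def)

lemma mk_cases: "mk L U = None \<or> (mk L U = Some (L, U) \<and> L \<le> U)"
  by (simp add: mk_def)

lemma params_le_ptop: "P \<in> params n I m \<Longrightarrow> P \<le> ptop n I m"
  by (rule le2I) (auto simp: params_def ptop_def)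

lemma valid_SomeI: "L \<le> U \<Longrightarrow> U \<le> ptop n I m \<Longrightarrow> valid (Some (L, U))"
  by (simp add: valid_def)

lemma goodf_mkI:
  assumes "g None = None"
    and "\<And>L U. L \<le> U \<Longrightarrow> U \<le> ptop n I m \<Longrightarrow>
           g (Some (L, U)) = None \<or> (\<exists>L' U'. g (Some (L, U)) = Some (L', U') \<and> L' \<le> U' \<and> U' \<le> U \<and> L \<le> L')"
  shows "goodf g"
  unfolding goodf_def
proof (rule conjI[OF assms(1)], intro allI impI)
  fix x assume x: "valid x"
  show "valid (g x) \<and> lel (g x) x"
  proof (cases x)
    case None then show ?thesis using assms(1) by (simp add: valid_def lel_def)
  next
    case (Some p)
    then obtain L U where xs: "x = Some (L, U)" by (cases p) auto
    then have v: "L \<le> U" "U \<le> ptop n I m" using x by (auto simp: valid_def)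
    from assms(2)[OF v] show ?thesis
    proof
      assume "g (Some (L, U)) = None" then show ?thesis using xs by (simp add: valid_def lel_def)
    next
      assume "\<exists>L' U'. g (Some (L, U)) = Some (L', U') \<and> L' \<le> U' \<and> U' \<le> U \<and> L \<le> L'"
      then obtain L' U' where "g (Some (L, U)) = Some (L', U')" "L' \<le> U'" "U' \<le> U" "L \<le> L'" by blast
      then show ?thesis using xs v by (auto simp: valid_def lel_def intro: order_trans)
    qed
  qed
qed

lemma locI:
  assumes "\<And>L U L' U'. L \<le> U \<Longrightarrow> U \<le> ptop n I m \<Longrightarrow> g (Some (L, U)) = Some (L', U') \<Longrightarrow>
      (\<forall>w. w \<noteq> v \<longrightarrow> L' w = L w \<and> U' w = U w)"
  shows "loc v g"
  unfolding loc_def sameoff_def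
proof (intro allI impI)
  fix x L' U' L U w
  assume "valid x" "g x = Some (L', U')" "x = Some (L, U)" "w \<noteq> v"
  then show "L' w = L w \<and> U' w = U w" using assms[of L U L' U'] by (auto simp: valid_def)
qed

lemma soundI:
  assumes "g None = None"
    and "\<And>L U. L \<le> P \<Longrightarrow> P \<le> U \<Longrightarrow> inbox P (g (Some (L, U)))"
  shows "sound P g"
  unfolding sound_def inbox_def using assms(2) by (auto simp: inbox_def)

lemma nt_None: "nabla_t n I m t None = None"
  by (simp add: nabla_t_def)

lemma nt_Inc: "nabla_t n I m (x, v, Inc) (Some (L, U)) =
    mk (sup L (pbot(v := (pbot v)(omega_of I v x := x v + 1)))) U"
  by (simp add: nabla_t_def)

lemma nt_Dec: "nabla_t n I m (x, v, Dec) (Some (L, U)) =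
    mk L (inf U ((ptop n I m)(v := (ptop n I m v)(omega_of I v x := x v - 1))))"
  by (simp add: nabla_t_def)

lemma goodf_nt: "goodf (nabla_t n I m t)"
proof -
  obtain x v d where t: "t = (x, v, d)" by (cases t) auto
  show ?thesis
  proof (rule goodf_mkI)
    show "nabla_t n I m t None = None" by (simp add: nt_None)
    fix L U :: param assume v: "L \<le> U" "U \<le> ptop n I m"
    show "nabla_t n I m t (Some (L, U)) = None \<or> (\<exists>L' U'. nabla_t n I m t (Some (L, U)) = Some (L', U') \<and> L' \<le> U' \<and> U' \<le> U \<and> L \<le> L')"
    proof (cases d)
      case Inc
      then show ?thesis using mk_cases[of "sup L (pbot(v := (pbot v)(omega_of I v x := x v + 1)))" U]
        by (auto simp: t nt_Inc)
    next
      case Dec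
      then show ?thesis using mk_cases[of L "inf U ((ptop n I m)(v := (ptop n I m v)(omega_of I v x := x v - 1)))"]
        by (auto simp: t nt_Dec)
    qed
  qed
qed

lemma loc_nt: "loc (tnode t) (nabla_t n I m t)"
proof -
  obtain x v d where t: "t = (x, v, d)" by (cases t) auto
  show ?thesis
  proof (rule locI)
    fix L U L' U' assume v: "L \<le> U" "U \<le> ptop n I m" and e: "nabla_t n I m t (Some (L, U)) = Some (L', U')"
    show "\<forall>w. w \<noteq> tnode t \<longrightarrow> L' w = L w \<and> U' w = U w"
    proof (intro allI impI)
      fix w assume w: "w \<noteq> tnode t"
      then have wv: "w \<noteq> v" by (simp add: t tnode_def)
      show "L' w = L w \<and> U' w = U w"
      proof (cases d)
        case Inc
        then have "L' = sup L (pbot(v := (pbot v)(omega_of I v x := x v + 1)))" "U' = U"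
          using e by (auto simp: t nt_Inc mk_def split: if_splits)
        then show ?thesis using wv by (auto simp: pbot_def fun_eq_iff sup_max)
      next
        case Dec
        then have "L' = L" "U' = inf U ((ptop n I m)(v := (ptop n I m v)(omega_of I v x := x v - 1)))"
          using e by (auto simp: t nt_Dec mk_def split: if_splits)
        moreover have "U w z \<le> ptop n I m w z" for z using v(2) le2 by blast
        ultimately show ?thesis using wv by (auto simp: fun_eq_iff inf_absorb1)
      qed
    qed
  qed
qed

lemma sound_nt:
  assumes P: "P \<in> Ptrans n I m t"
  shows "sound P (nabla_t n I m t)"
proof -
  obtain x v d where t: "t = (x, v, d)" by (cases t) auto
  have Pp: "P \<in> params n I m" using P by (cases d) (auto simp: t Ptrans_def)
  show ?thesis
  proof (rule soundI)
    show "nabla_t n I m t None = None" by (simp add: nt_None)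
    fix L U assume LP: "L \<le> P" and PU: "P \<le> U"
    show "inbox P (nabla_t n I m t (Some (L, U)))"
    proof (cases d)
      case Inc
      then have Pv: "P v (omega_of I v x) \<ge> x v + 1" using P by (simp add: t Ptrans_def)
      have "sup L (pbot(v := (pbot v)(omega_of I v x := x v + 1))) \<le> P"
        using LP Pv by (intro le2I) (auto simp: pbot_def le2)
      then show ?thesis using PU Inc
        by (simp add: t nt_Inc mk_Some inbox_def order_trans[OF _ PU])
    next
      case Dec
      then have Pv: "P v (omega_of I v x) \<le> x v - 1" using P by (simp add: t Ptrans_def)
      have "P \<le> inf U ((ptop n I m)(v := (ptop n I m v)(omega_of I v x := x v - 1)))"
        using PU Pv params_le_ptop[OF Pp] by (intro le2I) (auto simp: le2)
      then show ?thesis using LP Dec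
        by (simp add: t nt_Dec mk_Some inbox_def order_trans[OF LP])
    qed
  qed
qed


lemma Max_aux: "Max ({a::nat} \<union> (if c then {b} else {})) = (if c then max a b else a)"
  by auto

lemma Min_aux: "Min ({a::nat} \<union> (if c then {b} else {})) = (if c then min a b else a)"
  by auto

definition Lst :: "nat \<Rightarrow> nat \<Rightarrow> sgn \<Rightarrow> param \<Rightarrow> param" where
  "Lst u v s L = (\<lambda>v' \<omega>. if v' = v \<and> is_coord n I m v \<omega> then
      (if 0 \<le> int (\<omega> u) - shift s \<and> int (\<omega> u) - shift s \<le> int (m u)
       then max (L v \<omega>) (L v (\<omega>(u := nat (int (\<omega> u) - shift s)))) else L v \<omega>)
      else L v' \<omega>)"

definition Ust :: "nat \<Rightarrow> nat \<Rightarrow> sgn \<Rightarrow> param \<Rightarrow> param" where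
  "Ust u v s U = (\<lambda>v' \<omega>. if v' = v \<and> is_coord n I m v \<omega> then
      (if 0 \<le> int (\<omega> u) + shift s \<and> int (\<omega> u) + shift s \<le> int (m u)
       then min (U v \<omega>) (U v (\<omega>(u := nat (int (\<omega> u) + shift s)))) else U v \<omega>)
      else U v' \<omega>)"

lemma infl_None: "infl_step n I m u v s None = None"
  by (simp add: infl_step_def)

lemma infl_Some: "infl_step n I m u v s (Some (L, U)) = mk (Lst u v s L) (Ust u v s U)"
  unfolding infl_step_def Lst_def Ust_def by (simp only: option.case prod.case Max_aux Min_aux)

lemma Lst_ge: "L \<le> Lst u v s L"
  by (rule le2I) (auto simp: Lst_def)

lemma Ust_le: "Ust u v s U \<le> U"
  by (rule le2I) (auto simp: Ust_def)

lemma goodf_infl: "goodf (infl_step n I m u v s)"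
proof (rule goodf_mkI)
  show "infl_step n I m u v s None = None" by (simp add: infl_None)
  fix L U :: param
  show "infl_step n I m u v s (Some (L, U)) = None \<or> (\<exists>L' U'. infl_step n I m u v s (Some (L, U)) = Some (L', U') \<and> L' \<le> U' \<and> U' \<le> U \<and> L \<le> L')"
    using mk_cases[of "Lst u v s L" "Ust u v s U"] Lst_ge[of L u v s] Ust_le[of u v s U]
    by (auto simp: infl_Some)
qed

lemma loc_infl: "loc v (infl_step n I m u v s)"
proof (rule locI)
  fix L U L' U' assume "infl_step n I m u v s (Some (L, U)) = Some (L', U')"
  then have "L' = Lst u v s L" "U' = Ust u v s U" by (auto simp: infl_Some mk_def split: if_splits)
  then show "\<forall>w. w \<noteq> v \<longrightarrow> L' w = L w \<and> U' w = U w" by (auto simp: Lst_def Ust_def fun_eq_iff)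
qed

lemma Omega_upd: "\<omega> \<in> Omega I m v \<Longrightarrow> u \<in> regs I v \<Longrightarrow> k \<le> m u \<Longrightarrow> \<omega>(u := k) \<in> Omega I m v"
  by (auto simp: Omega_def)

lemma Omega_le: "\<omega> \<in> Omega I m v \<Longrightarrow> u \<in> regs I v \<Longrightarrow> \<omega> u \<le> m u"
  by (auto simp: Omega_def)

lemma sound_infl_plus:
  assumes P: "P \<in> Pconstr n I m (u, v, SPlus)" and u: "u \<in> regs I v"
  shows "sound P (infl_step n I m u v SPlus)"
proof (rule soundI)
  show "infl_step n I m u v SPlus None = None" by (simp add: infl_None)
  have mono: "P v (\<omega>(u := k - 1)) \<le> P v (\<omega>(u := k))" if "\<omega> \<in> Omega I m v" "k \<in> {1..m u}" for \<omega> k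
    using P that by (auto simp: Pconstr_def)
  fix L U assume LP: "L \<le> P" and PU: "P \<le> U"
  have "Lst u v SPlus L \<le> P"
  proof (rule le2I)
    fix v' \<omega>
    show "Lst u v SPlus L v' \<omega> \<le> P v' \<omega>"
    proof (cases "v' = v \<and> is_coord n I m v \<omega>")
      case True
      then have om: "\<omega> \<in> Omega I m v" by (simp add: is_coord_def)
      have "L v (\<omega>(u := \<omega> u - 1)) \<le> P v \<omega>" if "1 \<le> \<omega> u"
      proof -
        have "L v (\<omega>(u := \<omega> u - 1)) \<le> P v (\<omega>(u := \<omega> u - 1))" using le2[OF LP] .
        also have "\<dots> \<le> P v (\<omega>(u := \<omega> u))" using mono[OF om, of "\<omega> u"] that Omega_le[OF om u] by simp
        finally show ?thesis by simp
      qed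
      moreover have "nat (int (\<omega> u) - 1) = \<omega> u - 1" by simp
      ultimately show ?thesis using True le2[OF LP, of v' \<omega>] by (auto simp: Lst_def shift_def)
    next
      case False then show ?thesis using le2[OF LP, of v' \<omega>] by (auto simp: Lst_def)
    qed
  qed
  moreover have "P \<le> Ust u v SPlus U"
  proof (rule le2I)
    fix v' \<omega>
    show "P v' \<omega> \<le> Ust u v SPlus U v' \<omega>"
    proof (cases "v' = v \<and> is_coord n I m v \<omega>")
      case True
      then have om: "\<omega> \<in> Omega I m v" by (simp add: is_coord_def)
      have "P v \<omega> \<le> U v (\<omega>(u := \<omega> u + 1))" if "\<omega> u + 1 \<le> m u"
      proof -
        have "P v \<omega> = P v (\<omega>(u := \<omega> u + 1 - 1))" by simp
        also have "\<dots> \<le> P v (\<omega>(u := \<omega> u + 1))" using mono[OF om, of "\<omega> u + 1"] that by simp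
        also have "\<dots> \<le> U v (\<omega>(u := \<omega> u + 1))" using le2[OF PU] .
        finally show ?thesis .
      qed
      moreover have "nat (int (\<omega> u) + 1) = \<omega> u + 1" by simp
      ultimately show ?thesis using True le2[OF PU, of v' \<omega>] by (auto simp: Ust_def shift_def)
    next
      case False then show ?thesis using le2[OF PU, of v' \<omega>] by (auto simp: Ust_def)
    qed
  qed
  ultimately show "inbox P (infl_step n I m u v SPlus (Some (L, U)))"
    by (simp add: infl_Some mk_Some[OF order_trans] inbox_def)
qed

lemma sound_infl_minus:
  assumes P: "P \<in> Pconstr n I m (u, v, SMinus)" and u: "u \<in> regs I v"
  shows "sound P (infl_step n I m u v SMinus)"
proof (rule soundI)
  show "infl_step n I m u v SMinus None = None" by (simp add: infl_None)
  have mono: "P v (\<omega>(u := k)) \<le> P v (\<omega>(u := k - 1))" if "\<omega> \<in> Omega I m v" "k \<in> {1..m u}" for \<omega> k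
    using P that by (auto simp: Pconstr_def)
  fix L U assume LP: "L \<le> P" and PU: "P \<le> U"
  have "Lst u v SMinus L \<le> P"
  proof (rule le2I)
    fix v' \<omega>
    show "Lst u v SMinus L v' \<omega> \<le> P v' \<omega>"
    proof (cases "v' = v \<and> is_coord n I m v \<omega>")
      case True
      then have om: "\<omega> \<in> Omega I m v" by (simp add: is_coord_def)
      have "L v (\<omega>(u := \<omega> u + 1)) \<le> P v \<omega>" if "\<omega> u + 1 \<le> m u"
      proof -
        have "L v (\<omega>(u := \<omega> u + 1)) \<le> P v (\<omega>(u := \<omega> u + 1))" using le2[OF LP] .
        also have "\<dots> \<le> P v (\<omega>(u := \<omega> u + 1 - 1))" using mono[OF om, of "\<omega> u + 1"] that by simp
        finally show ?thesis by simp
      qed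
      moreover have "nat (int (\<omega> u) + 1) = \<omega> u + 1" by simp
      ultimately show ?thesis using True le2[OF LP, of v' \<omega>] by (auto simp: Lst_def shift_def)
    next
      case False then show ?thesis using le2[OF LP, of v' \<omega>] by (auto simp: Lst_def)
    qed
  qed
  moreover have "P \<le> Ust u v SMinus U"
  proof (rule le2I)
    fix v' \<omega>
    show "P v' \<omega> \<le> Ust u v SMinus U v' \<omega>"
    proof (cases "v' = v \<and> is_coord n I m v \<omega>")
      case True
      then have om: "\<omega> \<in> Omega I m v" by (simp add: is_coord_def)
      have "P v \<omega> \<le> U v (\<omega>(u := \<omega> u - 1))" if "1 \<le> \<omega> u"
      proof -
        have "P v \<omega> = P v (\<omega>(u := \<omega> u))" by simp
        also have "\<dots> \<le> P v (\<omega>(u := \<omega> u - 1))" using mono[OF om, of "\<omega> u"] that Omega_le[OF om u] by simp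
        also have "\<dots> \<le> U v (\<omega>(u := \<omega> u - 1))" using le2[OF PU] .
        finally show ?thesis .
      qed
      moreover have "nat (int (\<omega> u) - 1) = \<omega> u - 1" by simp
      ultimately show ?thesis using True le2[OF PU, of v' \<omega>] by (auto simp: Ust_def shift_def)
    next
      case False then show ?thesis using le2[OF PU, of v' \<omega>] by (auto simp: Ust_def)
    qed
  qed
  ultimately show "inbox P (infl_step n I m u v SMinus (Some (L, U)))"
    by (simp add: infl_Some mk_Some[OF order_trans] inbox_def)
qed


definition sg :: "nat \<Rightarrow> nat \<Rightarrow> int" where
  "sg v u = (if (u, v, SPlus) \<in> set R then 1 else if (u, v, SMinus) \<in> set R then -1 else 0)"

definition pot :: "nat \<Rightarrow> (nat \<Rightarrow> nat) \<Rightarrow> int" where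
  "pot v \<omega> = (\<Sum>u\<in>regs I v. sg v u * int (\<omega> u))"

lemma prec_refl: "prec I R v \<omega> \<omega>"
  by (auto simp: prec_def)

lemma prec_trans: "prec I R v a b \<Longrightarrow> prec I R v b c \<Longrightarrow> prec I R v a c"
  unfolding prec_def by (auto split: if_splits) (meson order_trans)+

lemma prec_term: "prec I R v a b \<Longrightarrow> u \<in> regs I v \<Longrightarrow> sg v u * int (a u) \<le> sg v u * int (b u)"
  by (auto simp: prec_def sg_def split: if_splits)

lemma prec_pot: "prec I R v a b \<Longrightarrow> pot v a \<le> pot v b"
  unfolding pot_def by (rule sum_mono) (rule prec_term)

lemma prec_pot_eq:
  assumes p: "prec I R v a b" and e: "pot v a = pot v b"
  shows "prec I R v b a"
proof -
  have "(\<Sum>u\<in>regs I v. sg v u * int (b u) - sg v u * int (a u)) = 0"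
    using e by (simp add: pot_def sum_subtractf)
  then have z: "\<forall>u\<in>regs I v. sg v u * int (b u) - sg v u * int (a u) = 0"
    using sum_nonneg_eq_0_iff[OF finite_regs, where f="\<lambda>u. sg v u * int (b u) - sg v u * int (a u)"]
      prec_term[OF p] by auto
  show ?thesis unfolding prec_def
  proof
    fix u assume u: "u \<in> regs I v"
    have pu: "if (u, v, SPlus) \<in> set R then a u \<le> b u else if (u, v, SMinus) \<in> set R then b u \<le> a u else a u = b u"
      using p u by (simp add: prec_def)
    have zu: "sg v u * int (b u) - sg v u * int (a u) = 0" using z u by blast
    show "if (u, v, SPlus) \<in> set R then b u \<le> a u else if (u, v, SMinus) \<in> set R then a u \<le> b u else b u = a u"
      using pu zu by (auto simp: sg_def split: if_splits)
  qed
qed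

definition signok :: "param \<Rightarrow> nat \<Rightarrow> bool" where
  "signok P v = (\<forall>u. ((u, v, SPlus) \<in> set R \<longrightarrow> P \<in> Pconstr n I m (u, v, SPlus))
                   \<and> ((u, v, SMinus) \<in> set R \<longrightarrow> P \<in> Pconstr n I m (u, v, SMinus)))"

definition dist :: "nat \<Rightarrow> (nat \<Rightarrow> nat) \<Rightarrow> (nat \<Rightarrow> nat) \<Rightarrow> nat" where
  "dist v a b = (\<Sum>u\<in>regs I v. nat \<bar>int (a u) - int (b u)\<bar>)"

lemma sum_less_one:
  assumes "finite S" "u \<in> S" "(f::'a \<Rightarrow> nat) u < g u" "\<forall>w\<in>S. w \<noteq> u \<longrightarrow> f w = g w"
  shows "sum f S < sum g S"
  using assms by (intro sum_strict_mono_ex1) auto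

lemma Omega_eqI: "a \<in> Omega I m v \<Longrightarrow> b \<in> Omega I m v \<Longrightarrow> \<forall>u\<in>regs I v. a u = b u \<Longrightarrow> a = b"
  by (auto simp: Omega_def fun_eq_iff)

lemma mono_prec_aux:
  assumes sok: "signok P v" and b: "b \<in> Omega I m v"
  shows "dist v a b = N \<Longrightarrow> a \<in> Omega I m v \<Longrightarrow> prec I R v a b \<Longrightarrow> P v a \<le> P v b"
proof (induction N arbitrary: a rule: less_induct)
  case (less N)
  show ?case
  proof (cases "\<forall>u\<in>regs I v. a u = b u")
    case True
    then have "a = b" using Omega_eqI less.prems b by blast
    then show ?thesis by simp
  next
    case False
    then obtain u where u: "u \<in> regs I v" "a u \<noteq> b u" by blast
    have pu: "if (u, v, SPlus) \<in> set R then a u \<le> b u else if (u, v, SMinus) \<in> set R then b u \<le> a u else a u = b u"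
      using less.prems(3) u(1) by (simp add: prec_def)
    have bu: "b u \<le> m u" using Omega_le[OF b u(1)] .
    show ?thesis
    proof (cases "(u, v, SPlus) \<in> set R")
      case True
      then have lt: "a u < b u" using pu u(2) by simp
      define a' where "a' = a(u := a u + 1)"
      have a'O: "a' \<in> Omega I m v" unfolding a'_def using Omega_upd[OF less.prems(2) u(1)] lt bu by simp
      have pa': "prec I R v a' b"
        using less.prems(3) lt True unfolding prec_def a'_def by (auto split: if_splits)
      have "dist v a' b < dist v a b" unfolding dist_def
        by (rule sum_less_one[OF finite_regs u(1)]) (use lt in \<open>auto simp: a'_def\<close>)
      then have "P v a' \<le> P v b" using less.IH less.prems(1) a'O pa' by blast
      moreover have "P v a \<le> P v a'"
      proof -
        have "P \<in> Pconstr n I m (u, v, SPlus)" using sok True by (simp add: signok_def)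
        then have h: "\<forall>\<omega>\<in>Omega I m v. \<forall>k\<in>{1..m u}. P v (\<omega>(u := k - 1)) \<le> P v (\<omega>(u := k))"
          by (simp add: Pconstr_def)
        have "a u + 1 \<in> {1..m u}" using lt bu by simp
        then have "P v (a(u := a u + 1 - 1)) \<le> P v (a(u := a u + 1))"
          using h less.prems(2) by blast
        then show ?thesis by (simp add: a'_def)
      qed
      ultimately show ?thesis by simp
    next
      case False
      then have M: "(u, v, SMinus) \<in> set R" using pu u(2) by (auto split: if_splits)
      then have lt: "b u < a u" using pu u(2) False by simp
      define a' where "a' = a(u := a u - 1)"
      have a'O: "a' \<in> Omega I m v" unfolding a'_def using Omega_upd[OF less.prems(2) u(1)] Omega_le[OF less.prems(2) u(1)] by simp
      have pa': "prec I R v a' b"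
        using less.prems(3) lt False M unfolding prec_def a'_def by (auto split: if_splits)
      have "dist v a' b < dist v a b" unfolding dist_def
        by (rule sum_less_one[OF finite_regs u(1)]) (use lt in \<open>auto simp: a'_def\<close>)
      then have "P v a' \<le> P v b" using less.IH less.prems(1) a'O pa' by blast
      moreover have "P v a \<le> P v a'"
      proof -
        have "P \<in> Pconstr n I m (u, v, SMinus)" using sok M by (simp add: signok_def)
        then have h: "\<forall>\<omega>\<in>Omega I m v. \<forall>k\<in>{1..m u}. P v (\<omega>(u := k)) \<le> P v (\<omega>(u := k - 1))"
          by (simp add: Pconstr_def)
        have "a u \<in> {1..m u}" using lt Omega_le[OF less.prems(2) u(1)] by simp
        then have "P v (a(u := a u)) \<le> P v (a(u := a u - 1))"
          using h less.prems(2) by blast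
        then show ?thesis by (simp add: a'_def)
      qed
      ultimately show ?thesis by simp
    qed
  qed
qed

lemma mono_prec:
  "signok P v \<Longrightarrow> a \<in> Omega I m v \<Longrightarrow> b \<in> Omega I m v \<Longrightarrow> prec I R v a b \<Longrightarrow> P v a \<le> P v b"
  using mono_prec_aux by blast


definition Aset :: "nat \<Rightarrow> nat \<Rightarrow> param \<Rightarrow> param \<Rightarrow> (nat \<Rightarrow> nat) set" where
  "Aset u v L U = {\<omega> \<in> Omega I m v. \<exists>k\<in>{1..m u}.
                 L v (\<omega>(u := k)) < U v (\<omega>(u := k - 1)) \<or> U v (\<omega>(u := k)) > L v (\<omega>(u := k - 1))}"

definition Bo :: "nat \<Rightarrow> nat \<Rightarrow> param \<Rightarrow> param \<Rightarrow> (nat \<Rightarrow> nat) set" where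
  "Bo u v L U = {\<omega> \<in> Aset u v L U. L v \<omega> < U v \<omega> \<and>
                 (\<forall>\<omega>'\<in>Aset u v L U. L v \<omega> = L v \<omega>' \<and> (prec I R v \<omega>' \<omega> \<or> incomp I R v \<omega> \<omega>'))}"

definition Bu :: "nat \<Rightarrow> nat \<Rightarrow> param \<Rightarrow> param \<Rightarrow> (nat \<Rightarrow> nat) set" where
  "Bu u v L U = {\<omega> \<in> Aset u v L U. L v \<omega> < U v \<omega> \<and>
                 (\<forall>\<omega>'\<in>Aset u v L U. U v \<omega> = U v \<omega>' \<and> (prec I R v \<omega> \<omega>' \<or> incomp I R v \<omega> \<omega>'))}"

definition Lo :: "nat \<Rightarrow> nat \<Rightarrow> param \<Rightarrow> param \<Rightarrow> param" where
  "Lo u v L U = (if \<exists>\<omega>. Bo u v L U = {\<omega>} then L(v := (L v)(the_elem (Bo u v L U) := L v (the_elem (Bo u v L U)) + 1)) else L)"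

definition Uo :: "nat \<Rightarrow> nat \<Rightarrow> param \<Rightarrow> param \<Rightarrow> param" where
  "Uo u v L U = (if \<exists>\<omega>. Bu u v L U = {\<omega>} then U(v := (U v)(the_elem (Bu u v L U) := U v (the_elem (Bu u v L U)) - 1)) else U)"

lemma obs_None: "nabla_obs n I m R u v None = None"
  by (simp add: nabla_obs_def)

lemma obs_Some: "nabla_obs n I m R u v (Some (L, U)) =
   (if Aset u v L U = {} then None else mk (Lo u v L U) (Uo u v L U))"
  unfolding nabla_obs_def Aset_def Bo_def Bu_def Lo_def Uo_def
  by (simp only: option.case prod.case Let_def)

lemma Lo_ge: "L \<le> Lo u v L U"
  by (rule le2I) (auto simp: Lo_def)

lemma Uo_le: "Uo u v L U \<le> U"
  by (rule le2I) (auto simp: Uo_def)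

lemma goodf_obs: "goodf (nabla_obs n I m R u v)"
proof (rule goodf_mkI)
  show "nabla_obs n I m R u v None = None" by (simp add: obs_None)
  fix L U :: param
  show "nabla_obs n I m R u v (Some (L, U)) = None \<or> (\<exists>L' U'. nabla_obs n I m R u v (Some (L, U)) = Some (L', U') \<and> L' \<le> U' \<and> U' \<le> U \<and> L \<le> L')"
    using mk_cases[of "Lo u v L U" "Uo u v L U"] Lo_ge[of L u v U] Uo_le[of u v L U]
    by (auto simp: obs_Some)
qed

lemma loc_obs: "loc v (nabla_obs n I m R u v)"
proof (rule locI)
  fix L U L' U' assume "nabla_obs n I m R u v (Some (L, U)) = Some (L', U')"
  then have "L' = Lo u v L U" "U' = Uo u v L U" by (auto simp: obs_Some mk_def split: if_splits)
  then show "\<forall>w. w \<noteq> v \<longrightarrow> L' w = L w \<and> U' w = U w" by (auto simp: Lo_def Uo_def)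
qed

lemma Aset_upd: "\<omega> \<in> Aset u v L U \<Longrightarrow> u \<in> regs I v \<Longrightarrow> j \<le> m u \<Longrightarrow> \<omega>(u := j) \<in> Aset u v L U"
  unfolding Aset_def using Omega_upd by auto

lemma finite_Aset: "finite (Aset u v L U)"
  using finite_Omega by (rule finite_subset[rotated]) (auto simp: Aset_def)

lemma sound_obs:
  assumes P: "P \<in> Pconstr n I m (u, v, SObs)" and sok: "signok P v" and u: "u \<in> regs I v"
  shows "sound P (nabla_obs n I m R u v)"
proof (rule soundI)
  show "nabla_obs n I m R u v None = None" by (simp add: obs_None)
  fix L U assume LP: "L \<le> P" and PU: "P \<le> U"
  let ?A = "Aset u v L U"
  obtain \<omega>0 k0 where w0: "\<omega>0 \<in> Omega I m v" "k0 \<in> {1..m u}" "P v (\<omega>0(u := k0)) \<noteq> P v (\<omega>0(u := k0 - 1))"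
    using P by (auto simp: Pconstr_def)
  define a0 where "a0 = \<omega>0(u := k0 - 1)"
  define b0 where "b0 = \<omega>0(u := k0)"
  have a0O: "a0 \<in> Omega I m v" "b0 \<in> Omega I m v" using Omega_upd[OF w0(1) u] w0(2) by (auto simp: a0_def b0_def)
  have "\<omega>0 \<in> ?A"
  proof -
    have "L v (\<omega>0(u := k0)) < U v (\<omega>0(u := k0 - 1)) \<or> U v (\<omega>0(u := k0)) > L v (\<omega>0(u := k0 - 1))"
      using w0(3) le2[OF LP, of v] le2[OF PU, of v] by (meson le_less_trans less_le_trans linorder_neqE_nat)
    then show ?thesis using w0(1,2) by (auto simp: Aset_def)
  qed
  then have ab: "a0 \<in> ?A" "b0 \<in> ?A" using Aset_upd[OF _ u] w0(2) by (auto simp: a0_def b0_def)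
  have Pab: "P v a0 \<noteq> P v b0" using w0(3) by (simp add: a0_def b0_def)
  have Aprec: "?A \<subseteq> Omega I m v" by (auto simp: Aset_def)
  have low: "L v w + 1 \<le> P v w" if Bw: "Bo u v L U = {w}" for w
  proof (rule ccontr)
    assume "\<not> ?thesis"
    then have Pw: "P v w = L v w" using le2[OF LP, of v w] by simp
    have wB: "w \<in> Bo u v L U" using Bw by simp
    then have wA: "w \<in> ?A" and Leq: "\<forall>\<omega>'\<in>?A. L v w = L v \<omega>'" by (auto simp: Bo_def)
    obtain d where d: "d \<in> ?A" "P v d > L v w"
    proof -
      have "L v a0 = L v w" "L v b0 = L v w" using bspec[OF Leq ab(1)] bspec[OF Leq ab(2)] by simp_all
      moreover have "L v a0 \<le> P v a0" "L v b0 \<le> P v b0" using le2[OF LP] by auto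
      ultimately have "P v a0 > L v w \<or> P v b0 > L v w" using Pab by linarith
      then show ?thesis using that ab by blast
    qed
    define D where "D = {\<omega> \<in> ?A. prec I R v d \<omega>}"
    have fD: "finite D" using finite_Aset by (auto simp: D_def)
    have dD: "d \<in> D" using d(1) prec_refl by (auto simp: D_def)
    have "Max (pot v ` D) \<in> pot v ` D" using fD dD by (intro Max_in) auto
    then obtain w' where w': "w' \<in> D" "pot v w' = Max (pot v ` D)" by (metis imageE)
    have wmax: "\<forall>y\<in>D. pot v y \<le> pot v w'" using w' fD by simp
    have w'A: "w' \<in> ?A" and pdw: "prec I R v d w'" using w'(1) by (auto simp: D_def)
    have "P v d \<le> P v w'" using mono_prec[OF sok] Aprec d(1) w'A pdw by blast
    then have Pw': "P v w' > L v w" using d(2) by simp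
    have "w' \<in> Bo u v L U"
    proof -
      have "L v w' = L v w" using bspec[OF Leq w'A] by simp
      moreover have "P v w' \<le> U v w'" using le2[OF PU] .
      ultimately have lu: "L v w' < U v w'" using Pw' by simp
      have "\<forall>\<omega>'\<in>?A. L v w' = L v \<omega>' \<and> (prec I R v \<omega>' w' \<or> incomp I R v w' \<omega>')"
      proof
        fix \<omega>' assume o: "\<omega>' \<in> ?A"
        have "L v w' = L v \<omega>'" using Leq o w'A by metis
        moreover have "prec I R v \<omega>' w' \<or> incomp I R v w' \<omega>'"
        proof (rule ccontr)
          assume "\<not> ?thesis"
          then have p1: "prec I R v w' \<omega>'" and p2: "\<not> prec I R v \<omega>' w'" by (auto simp: incomp_def)
          have "\<omega>' \<in> D" using o prec_trans[OF pdw p1] by (simp add: D_def)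
          then have "pot v \<omega>' \<le> pot v w'" using wmax by blast
          moreover have "pot v w' \<le> pot v \<omega>'" using prec_pot[OF p1] .
          ultimately have "pot v w' = pot v \<omega>'" by simp
          then show False using prec_pot_eq[OF p1] p2 by simp
        qed
        ultimately show "L v w' = L v \<omega>' \<and> (prec I R v \<omega>' w' \<or> incomp I R v w' \<omega>')" by simp
      qed
      then show ?thesis unfolding Bo_def using w'A lu by blast
    qed
    then have "w' = w" using Bw by simp
    then show False using Pw' Pw by simp
  qed
  have up: "P v w + 1 \<le> U v w" if Bw: "Bu u v L U = {w}" for w
  proof (rule ccontr)
    assume "\<not> ?thesis"
    then have Pw: "P v w = U v w" using le2[OF PU, of v w] by simp
    have wB: "w \<in> Bu u v L U" using Bw by simp
    then have wA: "w \<in> ?A" and Ueq: "\<forall>\<omega>'\<in>?A. U v w = U v \<omega>'" by (auto simp: Bu_def)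
    obtain d where d: "d \<in> ?A" "P v d < U v w"
    proof -
      have "U v a0 = U v w" "U v b0 = U v w" using bspec[OF Ueq ab(1)] bspec[OF Ueq ab(2)] by simp_all
      moreover have "P v a0 \<le> U v a0" "P v b0 \<le> U v b0" using le2[OF PU] by auto
      ultimately have "P v a0 < U v w \<or> P v b0 < U v w" using Pab by linarith
      then show ?thesis using that ab by blast
    qed
    define D where "D = {\<omega> \<in> ?A. prec I R v \<omega> d}"
    have fD: "finite D" using finite_Aset by (auto simp: D_def)
    have dD: "d \<in> D" using d(1) prec_refl by (auto simp: D_def)
    have "Min (pot v ` D) \<in> pot v ` D" using fD dD by (intro Min_in) auto
    then obtain w' where w': "w' \<in> D" "pot v w' = Min (pot v ` D)" by (metis imageE)
    have wmin: "\<forall>y\<in>D. pot v w' \<le> pot v y" using w' fD by simp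
    have w'A: "w' \<in> ?A" and pdw: "prec I R v w' d" using w'(1) by (auto simp: D_def)
    have "P v w' \<le> P v d" using mono_prec[OF sok] Aprec d(1) w'A pdw by blast
    then have Pw': "P v w' < U v w" using d(2) by simp
    have "w' \<in> Bu u v L U"
    proof -
      have "U v w' = U v w" using bspec[OF Ueq w'A] by simp
      moreover have "L v w' \<le> P v w'" using le2[OF LP] .
      ultimately have lu: "L v w' < U v w'" using Pw' by simp
      have "\<forall>\<omega>'\<in>?A. U v w' = U v \<omega>' \<and> (prec I R v w' \<omega>' \<or> incomp I R v w' \<omega>')"
      proof
        fix \<omega>' assume o: "\<omega>' \<in> ?A"
        have "U v w' = U v \<omega>'" using Ueq o w'A by metis
        moreover have "prec I R v w' \<omega>' \<or> incomp I R v w' \<omega>'"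
        proof (rule ccontr)
          assume "\<not> ?thesis"
          then have p1: "prec I R v \<omega>' w'" and p2: "\<not> prec I R v w' \<omega>'" by (auto simp: incomp_def)
          have "\<omega>' \<in> D" using o prec_trans[OF p1 pdw] by (simp add: D_def)
          then have "pot v w' \<le> pot v \<omega>'" using wmin by blast
          moreover have "pot v \<omega>' \<le> pot v w'" using prec_pot[OF p1] .
          ultimately have "pot v w' = pot v \<omega>'" by simp
          then show False using prec_pot_eq[OF p1] p2 by simp
        qed
        ultimately show "U v w' = U v \<omega>' \<and> (prec I R v w' \<omega>' \<or> incomp I R v w' \<omega>')" by simp
      qed
      then show ?thesis unfolding Bu_def using w'A lu by blast
    qed
    then have "w' = w" using Bw by simp
    then show False using Pw' Pw by simp
  qed
  have LoP: "Lo u v L U \<le> P"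
  proof (cases "\<exists>\<omega>. Bo u v L U = {\<omega>}")
    case True
    then obtain w where Bw: "Bo u v L U = {w}" by blast
    show ?thesis using low[OF Bw] le2[OF LP] by (intro le2I) (auto simp: Lo_def Bw)
  next
    case False then show ?thesis using LP by (simp add: Lo_def)
  qed
  have PUo: "P \<le> Uo u v L U"
  proof (cases "\<exists>\<omega>. Bu u v L U = {\<omega>}")
    case True
    then obtain w where Bw: "Bu u v L U = {w}" by blast
    show ?thesis using up[OF Bw] le2[OF PU] by (intro le2I) (auto simp: Uo_def Bw)
  next
    case False then show ?thesis using PU by (simp add: Uo_def)
  qed
  have "?A \<noteq> {}" using ab by blast
  then show "inbox P (nabla_obs n I m R u v (Some (L, U)))"
    using LoP PUo by (simp add: obs_Some mk_Some[OF order_trans] inbox_def)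
qed


lemma nr_Obs: "nabla_r n I m R (u, v, SObs) = nabla_obs n I m R u v"
  by (simp add: nabla_r_def)
lemma nr_Plus: "nabla_r n I m R (u, v, SPlus) = fixp (infl_step n I m u v SPlus)"
  by (simp add: nabla_r_def)
lemma nr_Minus: "nabla_r n I m R (u, v, SMinus) = fixp (infl_step n I m u v SMinus)"
  by (simp add: nabla_r_def)

lemma goodf_nr: "goodf (nabla_r n I m R r)"
proof -
  obtain u v c where r: "r = (u, v, c)" by (cases r) auto
  show ?thesis by (cases c) (simp_all add: r nr_Obs nr_Plus nr_Minus goodf_obs goodf_fixp goodf_infl)
qed

lemma loc_nr: "loc v (nabla_r n I m R (u, v, c))"
  by (cases c) (simp_all add: nr_Obs nr_Plus nr_Minus loc_obs loc_fixp goodf_infl loc_infl)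

lemma wf_regs: "(u, v, c) \<in> set R \<Longrightarrow> u \<in> regs I v"
  using wf by (auto simp: wellformed_def)

lemma wf_not_both: "(u, v, SMinus) \<in> set R \<Longrightarrow> (u, v, SPlus) \<notin> set R"
  using wf by (auto simp: wellformed_def)

lemma pR_constr: "P \<in> pR n I m R T \<Longrightarrow> r \<in> set R \<Longrightarrow> P \<in> Pconstr n I m r"
  by (auto simp: pR_def)

lemma pR_signok: "P \<in> pR n I m R T \<Longrightarrow> signok P v"
  by (auto simp: signok_def pR_def)

lemma sound_nr:
  assumes P: "P \<in> pR n I m R T" and r: "r \<in> set R"
  shows "sound P (nabla_r n I m R r)"
proof -
  obtain u v c where rr: "r = (u, v, c)" by (cases r) auto
  have u: "u \<in> regs I v" using wf_regs r rr by simp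
  have Pc: "P \<in> Pconstr n I m (u, v, c)" using pR_constr[OF P r] rr by simp
  show ?thesis
  proof (cases c)
    case SPlus then show ?thesis using sound_fixp sound_infl_plus Pc u by (simp add: rr nr_Plus)
  next
    case SMinus then show ?thesis using sound_fixp sound_infl_minus Pc u by (simp add: rr nr_Minus)
  next
    case SObs then show ?thesis using sound_obs Pc u pR_signok[OF P] by (simp add: rr nr_Obs)
  qed
qed

lemma fold_prop:
  assumes "\<And>r. r \<in> set rs \<Longrightarrow> Q (g r)" "Q h" "\<And>f f'. Q f \<Longrightarrow> Q f' \<Longrightarrow> Q (f \<circ> f')"
  shows "Q (fold (\<lambda>r f. g r \<circ> f) rs h)"
  using assms by (induction rs arbitrary: h) auto

abbreviation F :: "constr list \<Rightarrow> lat \<Rightarrow> lat" where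
  "F R' \<equiv> fold (\<lambda>r f. nabla_r n I m R r \<circ> f) R' id"

lemma goodf_F: "goodf (F R')"
  by (rule fold_prop[where Q=goodf]) (auto simp: goodf_nr goodf_id goodf_comp)

lemma nset_eq: "nabla_set n I m R R' = fixp (F R')"
  by (simp add: nabla_set_def)

lemma goodf_nset: "goodf (nabla_set n I m R R')"
  by (simp add: nset_eq goodf_fixp goodf_F)

lemma loc_nset:
  assumes "\<forall>r\<in>set R'. fst (snd r) = v"
  shows "loc v (nabla_set n I m R R')"
proof -
  have "goodf (F R') \<and> loc v (F R')"
  proof (rule fold_prop[where Q="\<lambda>f. goodf f \<and> loc v f"])
    fix r assume "r \<in> set R'"
    then have "fst (snd r) = v" using assms by blast
    then obtain u c where "r = (u, v, c)" by (cases r) auto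
    then show "goodf (nabla_r n I m R r) \<and> loc v (nabla_r n I m R r)" by (simp add: goodf_nr loc_nr)
  next
    show "goodf id \<and> loc v id" by (simp add: goodf_id loc_id)
  next
    fix f f' assume "goodf f \<and> loc v f" "goodf f' \<and> loc v f'"
    then show "goodf (f \<circ> f') \<and> loc v (f \<circ> f')" by (simp add: goodf_comp loc_comp)
  qed
  then show ?thesis by (simp add: nset_eq loc_fixp)
qed

lemma sound_nset:
  assumes P: "P \<in> pR n I m R T" and sub: "set R' \<subseteq> set R"
  shows "sound P (nabla_set n I m R R')"
proof -
  have "sound P (F R')"
    by (rule fold_prop[where Q="sound P"]) (use sound_nr[OF P] sub sound_id sound_comp in auto)
  then show ?thesis by (simp add: nset_eq sound_fixp)
qed

lemma fold_fixed:
  assumes "\<forall>r\<in>set rs. goodf (g r)" "goodf h" "valid y" "fold (\<lambda>r f. g r \<circ> f) rs h y = y"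
  shows "h y = y \<and> (\<forall>r\<in>set rs. g r y = y)"
  using assms
proof (induction rs arbitrary: h)
  case Nil then show ?case by simp
next
  case (Cons r rs)
  have gr: "goodf (g r)" using Cons.prems(1) by simp
  have "goodf (g r \<circ> h)" using goodf_comp[OF gr Cons.prems(2)] .
  then have IH: "(g r \<circ> h) y = y \<and> (\<forall>r'\<in>set rs. g r' y = y)"
    using Cons.IH[of "g r \<circ> h"] Cons.prems \<open>goodf (g r \<circ> h)\<close> by (simp add: o_def)
  have hy: "valid (h y)" "lel (h y) y" using Cons.prems(2,3) by (auto simp: goodf_def)
  have "lel (g r (h y)) (h y)" using gr hy(1) by (simp add: goodf_def)
  then have "lel y (h y)" using IH by simp
  then have "h y = y" using lel_antisym hy(2) by blast
  then show ?case using IH by simp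
qed

lemma nset_fixed:
  assumes "valid x" "r \<in> set R'"
  shows "nabla_r n I m R r (nabla_set n I m R R' x) = nabla_set n I m R R' x"
proof -
  let ?y = "nabla_set n I m R R' x"
  have "F R' (fixp (F R') x) = fixp (F R') x" by (rule fixp_fixed[OF goodf_F assms(1)])
  moreover have "valid ?y" using goodf_nset assms(1) by (simp add: goodf_def)
  ultimately show ?thesis
    using fold_fixed[of R' "nabla_r n I m R" id ?y] goodf_nr goodf_id assms(2) by (simp add: nset_eq)
qed

definition goodc :: "constr \<Rightarrow> param \<Rightarrow> param \<Rightarrow> bool" where
  "goodc r L U = (case r of
      (u, v, SPlus) \<Rightarrow> (\<forall>\<omega>\<in>Omega I m v. \<forall>k\<in>{1..m u}.
           L v (\<omega>(u := k - 1)) \<le> L v (\<omega>(u := k)) \<and> U v (\<omega>(u := k - 1)) \<le> U v (\<omega>(u := k)))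
    | (u, v, SMinus) \<Rightarrow> (\<forall>\<omega>\<in>Omega I m v. \<forall>k\<in>{1..m u}.
           L v (\<omega>(u := k)) \<le> L v (\<omega>(u := k - 1)) \<and> U v (\<omega>(u := k)) \<le> U v (\<omega>(u := k - 1)))
    | (u, v, SObs) \<Rightarrow> (\<exists>\<omega>\<in>Omega I m v. \<exists>k\<in>{1..m u}.
           L v (\<omega>(u := k)) < U v (\<omega>(u := k - 1)) \<or> U v (\<omega>(u := k)) > L v (\<omega>(u := k - 1))))"

lemma goodc_local:
  "L' v = L v \<Longrightarrow> U' v = U v \<Longrightarrow> goodc (u, v, c) L' U' = goodc (u, v, c) L U"
  by (cases c) (simp_all add: goodc_def)

lemma fixp_eq_fixed: "goodf f \<Longrightarrow> valid x \<Longrightarrow> fixp f x = x \<Longrightarrow> f x = x"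
  using fixp_fixed by metis

lemma regs_node: "u \<in> regs I v \<Longrightarrow> v \<in> {1..n}"
  using Isub by (auto simp: regs_def)

lemma fixed_goodc:
  assumes r: "r \<in> set R" and v: "valid (Some (L, U))"
    and fx: "nabla_r n I m R r (Some (L, U)) = Some (L, U)"
  shows "goodc r L U"
proof -
  obtain u v c where rr: "r = (u, v, c)" by (cases r) auto
  have u: "u \<in> regs I v" using wf_regs r rr by simp
  have vn: "v \<in> {1..n}" using regs_node[OF u] .
  show ?thesis
  proof (cases c)
    case SObs
    then have "Aset u v L U \<noteq> {}" using fx by (auto simp: rr nr_Obs obs_Some split: if_splits)
    then show ?thesis by (auto simp: goodc_def rr SObs Aset_def)
  next
    case SPlus
    then have "infl_step n I m u v SPlus (Some (L, U)) = Some (L, U)"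
      using fx fixp_eq_fixed[OF goodf_infl v] by (simp add: rr nr_Plus)
    then have eqs: "Lst u v SPlus L = L" "Ust u v SPlus U = U" by (auto simp: infl_Some mk_def split: if_splits)
    have "L v (\<omega>(u := k - 1)) \<le> L v (\<omega>(u := k)) \<and> U v (\<omega>(u := k - 1)) \<le> U v (\<omega>(u := k))"
      if om: "\<omega> \<in> Omega I m v" and k: "k \<in> {1..m u}" for \<omega> k
    proof
      have c1: "is_coord n I m v (\<omega>(u := k))" using Omega_upd[OF om u, of k] k vn by (auto simp: is_coord_def)
      have "Lst u v SPlus L v (\<omega>(u := k)) = L v (\<omega>(u := k))" using eqs by simp
      moreover have "nat (int k - 1) = k - 1" by simp
      ultimately show "L v (\<omega>(u := k - 1)) \<le> L v (\<omega>(u := k))"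
        using c1 k by (simp add: Lst_def shift_def split: if_splits)
      have c0: "is_coord n I m v (\<omega>(u := k - 1))" using Omega_upd[OF om u, of "k - 1"] k vn by (auto simp: is_coord_def)
      have "Ust u v SPlus U v (\<omega>(u := k - 1)) = U v (\<omega>(u := k - 1))" using eqs by simp
      moreover have "nat (int (k - 1) + 1) = k" using k by simp
      moreover have "int (k - 1) + 1 \<le> int (m u)" using k by simp
      ultimately show "U v (\<omega>(u := k - 1)) \<le> U v (\<omega>(u := k))"
        using c0 k by (simp add: Ust_def shift_def split: if_splits)
    qed
    then show ?thesis by (simp add: goodc_def rr SPlus)
  next
    case SMinus
    then have "infl_step n I m u v SMinus (Some (L, U)) = Some (L, U)"
      using fx fixp_eq_fixed[OF goodf_infl v] by (simp add: rr nr_Minus)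
    then have eqs: "Lst u v SMinus L = L" "Ust u v SMinus U = U" by (auto simp: infl_Some mk_def split: if_splits)
    have "L v (\<omega>(u := k)) \<le> L v (\<omega>(u := k - 1)) \<and> U v (\<omega>(u := k)) \<le> U v (\<omega>(u := k - 1))"
      if om: "\<omega> \<in> Omega I m v" and k: "k \<in> {1..m u}" for \<omega> k
    proof
      have c0: "is_coord n I m v (\<omega>(u := k - 1))" using Omega_upd[OF om u, of "k - 1"] k vn by (auto simp: is_coord_def)
      have "Lst u v SMinus L v (\<omega>(u := k - 1)) = L v (\<omega>(u := k - 1))" using eqs by simp
      moreover have "nat (int (k - 1) + 1) = k" using k by simp
      moreover have "int (k - 1) + 1 \<le> int (m u)" using k by simp
      ultimately show "L v (\<omega>(u := k)) \<le> L v (\<omega>(u := k - 1))"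
        using c0 k by (simp add: Lst_def shift_def split: if_splits)
      have c1: "is_coord n I m v (\<omega>(u := k))" using Omega_upd[OF om u, of k] k vn by (auto simp: is_coord_def)
      have "Ust u v SMinus U v (\<omega>(u := k)) = U v (\<omega>(u := k))" using eqs by simp
      moreover have "nat (int k - 1) = k - 1" by simp
      ultimately show "U v (\<omega>(u := k)) \<le> U v (\<omega>(u := k - 1))"
        using c1 k by (simp add: Ust_def shift_def split: if_splits)
    qed
    then show ?thesis by (simp add: goodc_def rr SMinus)
  qed
qed


definition tbound :: "trans \<Rightarrow> param \<Rightarrow> param \<Rightarrow> bool" where
  "tbound t L U = (case t of (x, v, Inc) \<Rightarrow> x v + 1 \<le> L v (omega_of I v x)
                            | (x, v, Dec) \<Rightarrow> U v (omega_of I v x) \<le> x v - 1)"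

lemma nt_bound: "nabla_t n I m t y = Some (L, U) \<Longrightarrow> tbound t L U"
proof -
  assume h: "nabla_t n I m t y = Some (L, U)"
  obtain x v d where t: "t = (x, v, d)" by (cases t) auto
  obtain L0 U0 where y: "y = Some (L0, U0)" using h by (cases y) (auto simp: nt_None)
  show ?thesis
  proof (cases d)
    case Inc
    then have "L = sup L0 (pbot(v := (pbot v)(omega_of I v x := x v + 1)))"
      using h by (auto simp: t y nt_Inc mk_def split: if_splits)
    then show ?thesis by (simp add: tbound_def t Inc sup_max)
  next
    case Dec
    then have "U = inf U0 ((ptop n I m)(v := (ptop n I m v)(omega_of I v x := x v - 1)))"
      using h by (auto simp: t y nt_Dec mk_def split: if_splits)
    then show ?thesis by (simp add: tbound_def t Dec inf_min)
  qed
qed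

lemma tbound_mono: "tbound t L U \<Longrightarrow> L \<le> L' \<Longrightarrow> U' \<le> U \<Longrightarrow> tbound t L' U'"
  by (cases t) (auto simp: tbound_def split: dir.splits dest!: le2 intro: order_trans)

definition Inv :: "trans set \<Rightarrow> lat \<Rightarrow> bool" where
  "Inv T y = (valid y \<and> (\<forall>L U. y = Some (L, U) \<longrightarrow> (\<forall>t\<in>T. tbound t L U) \<and> (\<forall>r\<in>set R. goodc r L U)))"

definition step :: "trans \<Rightarrow> lat \<Rightarrow> lat" where
  "step t lt = nabla_set n I m R (filter (\<lambda>(u, v', c). v' = tnode t) R) (nabla_t n I m t lt)"

lemma psharp_eq: "psharp n I m R \<pi> = fold step (remdups \<pi>) (nabla_set n I m R R (Some (pbot, ptop n I m)))"
  by (simp add: psharp_def step_def[abs_def])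

lemma valid_init: "valid (Some (pbot, ptop n I m))"
  by (simp add: valid_def pbot_def le_fun_def)

lemma Inv_init: "Inv {} (nabla_set n I m R R (Some (pbot, ptop n I m)))"
proof -
  let ?y = "nabla_set n I m R R (Some (pbot, ptop n I m))"
  have v: "valid ?y" using goodf_nset valid_init by (simp add: goodf_def)
  have "goodc r L U" if "?y = Some (L, U)" "r \<in> set R" for L U r
    using fixed_goodc[OF that(2)] nset_fixed[OF valid_init that(2)] that(1) v by simp
  then show ?thesis using v by (simp add: Inv_def)
qed

lemma Inv_step:
  assumes I0: "Inv T y" shows "Inv (insert t T) (step t y)"
proof -
  let ?Rv = "filter (\<lambda>(u, v', c). v' = tnode t) R"
  let ?z = "nabla_t n I m t y"
  have vy: "valid y" using I0 by (simp add: Inv_def)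
  have vz: "valid ?z" and lz: "lel ?z y" using goodf_nt vy by (auto simp: goodf_def)
  have vy': "valid (step t y)" and ly': "lel (step t y) ?z"
    using goodf_nset vz by (auto simp: goodf_def step_def)
  have locs: "loc (tnode t) (nabla_set n I m R ?Rv \<circ> nabla_t n I m t)"
    by (rule loc_comp[OF goodf_nt goodf_nset loc_nset loc_nt]) auto
  have "(\<forall>t'\<in>insert t T. tbound t' L' U') \<and> (\<forall>r\<in>set R. goodc r L' U')"
    if y': "step t y = Some (L', U')" for L' U'
  proof -
    obtain L1 U1 where z: "?z = Some (L1, U1)" using ly' y' by (cases ?z) (auto simp: lel_def)
    obtain L U where yy: "y = Some (L, U)" using lz z by (cases y) (auto simp: lel_def)
    have le1: "L \<le> L1" "U1 \<le> U" using lz z yy by (auto simp: lel_def)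
    have le2': "L1 \<le> L'" "U' \<le> U1" using ly' z y' by (auto simp: lel_def)
    have old: "(\<forall>t\<in>T. tbound t L U) \<and> (\<forall>r\<in>set R. goodc r L U)" using I0 yy by (simp add: Inv_def)
    have tb: "\<forall>t'\<in>insert t T. tbound t' L' U'"
    proof
      fix t' assume "t' \<in> insert t T"
      then show "tbound t' L' U'"
      proof
        assume "t' = t"
        then show ?thesis using nt_bound[OF z] tbound_mono le2' by blast
      next
        assume "t' \<in> T"
        then show ?thesis using old tbound_mono[OF _ order_trans[OF le1(1) le2'(1)] order_trans[OF le2'(2) le1(2)]] by blast
      qed
    qed
    have gc: "\<forall>r\<in>set R. goodc r L' U'"
    proof
      fix r assume r: "r \<in> set R"
      obtain u v c where rr: "r = (u, v, c)" by (cases r) auto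
      show "goodc r L' U'"
      proof (cases "v = tnode t")
        case True
        then have "r \<in> set ?Rv" using r rr by simp
        then have "nabla_r n I m R r (step t y) = step t y"
          using nset_fixed[OF vz] by (simp add: step_def)
        then show ?thesis using fixed_goodc[OF r] vy' y' by simp
      next
        case False
        have "sameoff (tnode t) (step t y) y" using locs vy by (simp add: loc_def step_def)
        then have "L' v = L v" "U' v = U v" using y' yy False by (auto simp: sameoff_def)
        then show ?thesis using old r rr goodc_local by simp
      qed
    qed
    show ?thesis using tb gc by simp
  qed
  then show ?thesis using vy' by (simp add: Inv_def)
qed

lemma Inv_fold: "Inv T y \<Longrightarrow> Inv (T \<union> set ts) (fold step ts y)"
proof (induction ts arbitrary: T y)
  case Nil then show ?case by simp
next
  case (Cons t ts)
  have "Inv (insert t T) (step t y)" using Inv_step[OF Cons.prems] .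
  then have "Inv (insert t T \<union> set ts) (fold step ts (step t y))" using Cons.IH by blast
  then show ?case by simp
qed

lemma Inv_psharp: "Inv (set \<pi>) (psharp n I m R \<pi>)"
  using Inv_fold[OF Inv_init, of "remdups \<pi>"] by (simp add: psharp_eq)

lemma sound_step: "P \<in> pR n I m R T \<Longrightarrow> t \<in> T \<Longrightarrow> sound P (step t)"
proof -
  assume P: "P \<in> pR n I m R T" and t: "t \<in> T"
  have "P \<in> Ptrans n I m t" using P t by (simp add: pR_def pT_def)
  then have "sound P (nabla_t n I m t)" by (rule sound_nt)
  moreover have "sound P (nabla_set n I m R (filter (\<lambda>(u, v', c). v' = tnode t) R))"
    using sound_nset[OF P] by auto
  ultimately show ?thesis unfolding sound_def step_def by blast
qed

lemma sound_fold: "P \<in> pR n I m R T \<Longrightarrow> set ts \<subseteq> T \<Longrightarrow> inbox P y \<Longrightarrow> inbox P (fold step ts y)"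
proof (induction ts arbitrary: y)
  case Nil then show ?case by simp
next
  case (Cons t ts)
  then have "inbox P (step t y)" using sound_step[OF Cons.prems(1)] by (auto simp: sound_def)
  then show ?case using Cons by simp
qed

lemma psharp_sound: "P \<in> pR n I m R (set \<pi>) \<Longrightarrow> psharp n I m R \<pi> \<noteq> None"
proof -
  assume P: "P \<in> pR n I m R (set \<pi>)"
  have Pp: "P \<in> params n I m" using P by (simp add: pR_def pT_def)
  have "inbox P (Some (pbot, ptop n I m))"
    using params_le_ptop[OF Pp] by (simp add: inbox_def pbot_def le_fun_def)
  then have "inbox P (nabla_set n I m R R (Some (pbot, ptop n I m)))"
    using sound_nset[OF P] by (auto simp: sound_def)
  then have "inbox P (psharp n I m R \<pi>)"
    unfolding psharp_eq using sound_fold[OF P, of "remdups \<pi>"] by simp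
  then show ?thesis by (rule inbox_not_None)
qed


lemma pot_upd:
  assumes u: "u \<in> regs I v"
  shows "pot v (\<omega>(u := j)) = pot v \<omega> + sg v u * (int j - int (\<omega> u))"
proof -
  define S where "S = (\<Sum>w\<in>regs I v - {u}. sg v w * int (\<omega> w))"
  have c: "(\<Sum>w\<in>regs I v - {u}. sg v w * int ((\<omega>(u := j)) w)) = S"
    unfolding S_def by (rule sum.cong) auto
  have h1: "pot v (\<omega>(u := j)) = sg v u * int j + S"
    unfolding pot_def by (subst sum.remove[OF finite_regs u]) (simp only: c fun_upd_same)
  have h2: "pot v \<omega> = sg v u * int (\<omega> u) + S"
    unfolding pot_def S_def by (subst sum.remove[OF finite_regs u]) (rule refl)
  show ?thesis unfolding h1 h2 by (simp add: algebra_simps)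
qed

lemma adj:
  assumes om: "\<omega> \<in> Omega I m v" and u: "u \<in> regs I v" and m1: "1 \<le> m u"
    and H: "\<forall>\<omega>'\<in>Omega I m v. \<forall>k\<in>{1..m u}. f (\<omega>'(u := k)) = f (\<omega>'(u := k - 1))"
  shows "f \<omega> = f (\<omega>(u := (if 1 \<le> \<omega> u then \<omega> u - 1 else 1)))"
proof (cases "1 \<le> \<omega> u")
  case True
  have "\<omega> u \<in> {1..m u}" using True Omega_le[OF om u] by simp
  then have "f (\<omega>(u := \<omega> u)) = f (\<omega>(u := \<omega> u - 1))" using H om by blast
  then show ?thesis using True by simp
next
  case False
  then have z: "\<omega> u = 0" by simp
  have "1 \<in> {1..m u}" using m1 by simp
  then have "f (\<omega>(u := 1)) = f (\<omega>(u := 1 - 1))" using H om by blast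
  moreover have "\<omega>(u := 0) = \<omega>" using z by auto
  ultimately show ?thesis using False by simp
qed

end

locale cons = ctx +
  fixes L U :: param
  assumes LU: "L \<le> U" and Utop: "U \<le> ptop n I m" and gc: "\<forall>r\<in>set R. goodc r L U"
begin

definition fails :: "nat \<Rightarrow> nat \<Rightarrow> bool" where
  "fails v u = (\<forall>\<omega>\<in>Omega I m v. \<forall>k\<in>{1..m u}. L v (\<omega>(u := k)) = L v (\<omega>(u := k - 1)))"

definition failv :: "nat \<Rightarrow> bool" where
  "failv v = (\<exists>u. (u, v, SObs) \<in> set R \<and> fails v u)"

definition slack :: "nat \<Rightarrow> (nat \<Rightarrow> nat) set" where
  "slack v = {\<omega> \<in> Omega I m v. L v \<omega> < U v \<omega>}"

definition xv :: "nat \<Rightarrow> nat \<Rightarrow> nat" where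
  "xv v = (SOME x. x \<in> slack v \<and> (\<forall>y\<in>slack v. pot v y \<le> pot v x))"

definition PP :: param where
  "PP = (\<lambda>v. if failv v then (L v)(xv v := U v (xv v)) else L v)"

lemma LUp: "L v w \<le> U v w"
  using LU le2 by blast

lemma obs_m: "(u, v, SObs) \<in> set R \<Longrightarrow> 1 \<le> m u"
  using gc by (force simp: goodc_def)

lemma slack_ne:
  assumes r: "(u, v, SObs) \<in> set R" and f: "fails v u"
  shows "slack v \<noteq> {}"
proof -
  have u: "u \<in> regs I v" using wf_regs r .
  obtain \<omega> k where w: "\<omega> \<in> Omega I m v" "k \<in> {1..m u}"
    "L v (\<omega>(u := k)) < U v (\<omega>(u := k - 1)) \<or> U v (\<omega>(u := k)) > L v (\<omega>(u := k - 1))"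
    using bspec[OF gc r] by (auto simp: goodc_def)
  have eq: "L v (\<omega>(u := k)) = L v (\<omega>(u := k - 1))" using f w(1,2) by (simp add: fails_def)
  have o1: "\<omega>(u := k) \<in> Omega I m v" "\<omega>(u := k - 1) \<in> Omega I m v"
    using Omega_upd[OF w(1) u, of k] Omega_upd[OF w(1) u, of "k - 1"] w(2) by auto
  from w(3) show ?thesis
  proof
    assume "L v (\<omega>(u := k)) < U v (\<omega>(u := k - 1))"
    then have "\<omega>(u := k - 1) \<in> slack v" using eq o1 by (simp add: slack_def)
    then show ?thesis by blast
  next
    assume "U v (\<omega>(u := k)) > L v (\<omega>(u := k - 1))"
    then have "\<omega>(u := k) \<in> slack v" using eq o1 by (simp add: slack_def)
    then show ?thesis by blast
  qed
qed

lemma xv_prop: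
  assumes "failv v"
  shows "xv v \<in> slack v \<and> (\<forall>y\<in>slack v. pot v y \<le> pot v (xv v))"
proof -
  have ne: "slack v \<noteq> {}" using assms slack_ne by (auto simp: failv_def)
  have fin: "finite (slack v)" using finite_Omega by (rule finite_subset[rotated]) (auto simp: slack_def)
  have "Max (pot v ` slack v) \<in> pot v ` slack v" using fin ne by (intro Max_in) auto
  then obtain x where x: "x \<in> slack v" "pot v x = Max (pot v ` slack v)" by (metis imageE)
  have "\<forall>y\<in>slack v. pot v y \<le> pot v x" using x fin by simp
  then have "\<exists>x. x \<in> slack v \<and> (\<forall>y\<in>slack v. pot v y \<le> pot v x)" using x by blast
  then show ?thesis unfolding xv_def by (rule someI_ex)
qed

lemma L_le_PP: "L \<le> PP"
  by (rule le2I) (auto simp: PP_def LUp)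

lemma PP_le_U: "PP \<le> U"
  by (rule le2I) (auto simp: PP_def LUp)

lemma PP_params: "PP \<in> params n I m"
proof -
  have "PP \<le> ptop n I m" using PP_le_U Utop by (rule order_trans)
  then have h: "PP v w \<le> ptop n I m v w" for v w by (rule le2)
  show ?thesis unfolding params_def
  proof (intro CollectI allI conjI impI)
    fix v w assume "is_coord n I m v w" then show "PP v w \<le> m v" using h[of v w] by (simp add: ptop_def)
  next
    fix v w assume "\<not> is_coord n I m v w" then show "PP v w = 0" using h[of v w] by (simp add: ptop_def)
  qed
qed

lemma not_slack: "\<omega> \<in> Omega I m v \<Longrightarrow> \<omega> \<notin> slack v \<Longrightarrow> U v \<omega> \<le> L v \<omega>"
  by (auto simp: slack_def)

lemma plus_ok:
  assumes r: "(u, v, SPlus) \<in> set R"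
  shows "PP \<in> Pconstr n I m (u, v, SPlus)"
proof -
  have u: "u \<in> regs I v" using wf_regs r .
  have sgu: "sg v u = 1" using r by (simp add: sg_def)
  have g: "\<forall>\<omega>\<in>Omega I m v. \<forall>k\<in>{1..m u}.
           L v (\<omega>(u := k - 1)) \<le> L v (\<omega>(u := k)) \<and> U v (\<omega>(u := k - 1)) \<le> U v (\<omega>(u := k))"
    using bspec[OF gc r] by (simp add: goodc_def)
  have "PP v (\<omega>(u := k - 1)) \<le> PP v (\<omega>(u := k))" if om: "\<omega> \<in> Omega I m v" and k: "k \<in> {1..m u}" for \<omega> k
  proof -
    let ?a = "\<omega>(u := k - 1)" and ?b = "\<omega>(u := k)"
    have gl: "L v ?a \<le> L v ?b" "U v ?a \<le> U v ?b" using g om k by auto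
    have ab: "?a \<noteq> ?b" using k by (auto simp: fun_eq_iff)
    have bO: "?b \<in> Omega I m v" using Omega_upd[OF om u, of k] k by simp
    show ?thesis
    proof (cases "failv v")
      case False then show ?thesis using gl by (simp add: PP_def)
    next
      case True
      let ?x = "xv v"
      have xp: "?x \<in> slack v" "\<forall>y\<in>slack v. pot v y \<le> pot v ?x" using xv_prop[OF True] by auto
      show ?thesis
      proof (cases "?a = ?x")
        case True
        have "pot v ?b = pot v ?a + 1" using pot_upd[OF u, of \<omega> k] pot_upd[OF u, of \<omega> "k - 1"] sgu k by simp
        then have "?b \<notin> slack v" using xp(2) True by fastforce
        then have "U v ?b \<le> L v ?b" using not_slack bO by blast
        then show ?thesis using True ab gl \<open>failv v\<close> by (simp add: PP_def)
      next
        case False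
        then show ?thesis using gl LUp[of v ?b] \<open>failv v\<close> by (auto simp: PP_def)
      qed
    qed
  qed
  then show ?thesis using PP_params by (simp add: Pconstr_def)
qed

lemma minus_ok:
  assumes r: "(u, v, SMinus) \<in> set R"
  shows "PP \<in> Pconstr n I m (u, v, SMinus)"
proof -
  have u: "u \<in> regs I v" using wf_regs r .
  have sgu: "sg v u = -1" using r wf_not_both[OF r] by (simp add: sg_def)
  have g: "\<forall>\<omega>\<in>Omega I m v. \<forall>k\<in>{1..m u}.
           L v (\<omega>(u := k)) \<le> L v (\<omega>(u := k - 1)) \<and> U v (\<omega>(u := k)) \<le> U v (\<omega>(u := k - 1))"
    using bspec[OF gc r] by (simp add: goodc_def)
  have "PP v (\<omega>(u := k)) \<le> PP v (\<omega>(u := k - 1))" if om: "\<omega> \<in> Omega I m v" and k: "k \<in> {1..m u}" for \<omega> k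
  proof -
    let ?a = "\<omega>(u := k - 1)" and ?b = "\<omega>(u := k)"
    have gl: "L v ?b \<le> L v ?a" "U v ?b \<le> U v ?a" using g om k by auto
    have ab: "?a \<noteq> ?b" using k by (auto simp: fun_eq_iff)
    have aO: "?a \<in> Omega I m v" using Omega_upd[OF om u, of "k - 1"] k by auto
    show ?thesis
    proof (cases "failv v")
      case False then show ?thesis using gl by (simp add: PP_def)
    next
      case True
      let ?x = "xv v"
      have xp: "?x \<in> slack v" "\<forall>y\<in>slack v. pot v y \<le> pot v ?x" using xv_prop[OF True] by auto
      show ?thesis
      proof (cases "?b = ?x")
        case True
        have "pot v ?a = pot v ?b + 1" using pot_upd[OF u, of \<omega> k] pot_upd[OF u, of \<omega> "k - 1"] sgu k by simp
        then have "?a \<notin> slack v" using xp(2) True by fastforce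
        then have "U v ?a \<le> L v ?a" using not_slack aO by blast
        then show ?thesis using True ab gl \<open>failv v\<close> by (simp add: PP_def)
      next
        case False
        then show ?thesis using gl LUp[of v ?a] \<open>failv v\<close> by (auto simp: PP_def)
      qed
    qed
  qed
  then show ?thesis using PP_params by (simp add: Pconstr_def)
qed

lemma obs_ok:
  assumes r: "(u, v, SObs) \<in> set R"
  shows "PP \<in> Pconstr n I m (u, v, SObs)"
proof -
  have u: "u \<in> regs I v" using wf_regs r .
  have mu: "1 \<le> m u" using obs_m r .
  have "\<exists>\<omega>\<in>Omega I m v. \<exists>k\<in>{1..m u}. PP v (\<omega>(u := k)) \<noteq> PP v (\<omega>(u := k - 1))"
  proof (cases "failv v")
    case False
    then have "\<not> fails v u" using r by (auto simp: failv_def)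
    then show ?thesis using False by (auto simp: fails_def PP_def)
  next
    case True
    let ?x = "xv v"
    let ?Q = "PP v"
    have xp: "?x \<in> slack v" using xv_prop[OF True] by auto
    then have xO: "?x \<in> Omega I m v" and xs: "L v ?x < U v ?x" by (auto simp: slack_def)
    have Qx: "?Q ?x = U v ?x" using True by (simp add: PP_def)
    have Qo: "?Q w = L v w" if "w \<noteq> ?x" for w using True that by (simp add: PP_def)
    show ?thesis
    proof (cases "fails v u")
      case True
      define j where "j = (if 1 \<le> ?x u then ?x u - 1 else 1)"
      define z where "z = ?x(u := j)"
      have jx: "j \<noteq> ?x u" by (auto simp: j_def)
      have zx: "z \<noteq> ?x" using jx by (auto simp: z_def fun_eq_iff)
      have Lzx: "L v ?x = L v z"
        using adj[OF xO u mu, of "L v"] True by (simp add: fails_def z_def j_def)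
      have Qne: "?Q ?x \<noteq> ?Q z" using Qx Qo[OF zx] Lzx xs by simp
      show ?thesis
      proof (cases "1 \<le> ?x u")
        case True
        have "?x u \<in> {1..m u}" using True Omega_le[OF xO u] by simp
        moreover have "?x(u := ?x u) = ?x" by simp
        moreover have "?x(u := ?x u - 1) = z" using True by (simp add: z_def j_def)
        ultimately show ?thesis using xO Qne by metis
      next
        case False
        then have x0: "?x u = 0" by simp
        have "(1::nat) \<in> {1..m u}" using mu by simp
        moreover have "?x(u := 1 - 1) = ?x" using x0 by auto
        moreover have "?x(u := 1) = z" using False by (simp add: z_def j_def)
        ultimately show ?thesis using xO Qne by metis
      qed
    next
      case False
      obtain u2 where r2: "(u2, v, SObs) \<in> set R" and f2: "fails v u2" using \<open>failv v\<close> by (auto simp: failv_def)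
      have u2: "u2 \<in> regs I v" using wf_regs r2 .
      have mu2: "1 \<le> m u2" using obs_m r2 .
      have uu: "u \<noteq> u2" using False f2 by auto
      show ?thesis
      proof (rule ccontr)
        assume "\<not> ?thesis"
        then have H: "\<forall>\<omega>'\<in>Omega I m v. \<forall>k\<in>{1..m u}. ?Q (\<omega>'(u := k)) = ?Q (\<omega>'(u := k - 1))" by blast
        have H2: "\<forall>\<omega>'\<in>Omega I m v. \<forall>k\<in>{1..m u2}. L v (\<omega>'(u2 := k)) = L v (\<omega>'(u2 := k - 1))"
          using f2 by (simp add: fails_def)
        define j where "j = (if 1 \<le> ?x u then ?x u - 1 else 1)"
        define i where "i = (if 1 \<le> ?x u2 then ?x u2 - 1 else 1)"
        have jx: "j \<noteq> ?x u" by (auto simp: j_def)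
        have ix: "i \<noteq> ?x u2" by (auto simp: i_def)
        have jm: "j \<le> m u" using Omega_le[OF xO u] mu by (auto simp: j_def)
        have im: "i \<le> m u2" using Omega_le[OF xO u2] mu2 by (auto simp: i_def)
        define z where "z = ?x(u := j)"
        define y where "y = ?x(u2 := i)"
        define y' where "y' = y(u := j)"
        have zO: "z \<in> Omega I m v" using Omega_upd[OF xO u jm] by (simp add: z_def)
        have yO: "y \<in> Omega I m v" using Omega_upd[OF xO u2 im] by (simp add: y_def)
        have zx: "z \<noteq> ?x" using jx by (auto simp: z_def fun_eq_iff)
        have yx: "y \<noteq> ?x" using ix by (auto simp: y_def fun_eq_iff)
        have y'x: "y' \<noteq> ?x" using ix uu by (auto simp: y'_def y_def fun_eq_iff)
        have e1: "?Q ?x = ?Q z" unfolding z_def j_def by (rule adj[OF xO u mu H])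
        have yu: "y u = ?x u" using uu by (simp add: y_def)
        have "?Q y = ?Q (y(u := (if 1 \<le> y u then y u - 1 else 1)))" by (rule adj[OF yO u mu H])
        then have e2: "?Q y = ?Q y'" by (simp only: yu y'_def j_def)
        have e3: "L v ?x = L v y" unfolding y_def i_def by (rule adj[OF xO u2 mu2 H2])
        have zu2: "z u2 = ?x u2" using uu by (simp add: z_def)
        have zy': "z(u2 := i) = y'" using uu by (auto simp: z_def y'_def y_def fun_eq_iff)
        have "L v z = L v (z(u2 := (if 1 \<le> z u2 then z u2 - 1 else 1)))" by (rule adj[OF zO u2 mu2 H2])
        then have e4: "L v z = L v y'" by (simp only: zu2 i_def[symmetric] zy')
        have "U v ?x = L v ?x"
          using e1 e2 e3 e4 Qx Qo[OF zx] Qo[OF yx] Qo[OF y'x] by simp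
        then show False using xs by simp
      qed
    qed
  qed
  then show ?thesis using PP_params by (simp add: Pconstr_def)
qed

lemma PP_constr: "r \<in> set R \<Longrightarrow> PP \<in> Pconstr n I m r"
proof -
  assume r: "r \<in> set R"
  obtain u v c where rr: "r = (u, v, c)" by (cases r) auto
  show ?thesis using r by (cases c) (auto simp: rr plus_ok minus_ok obs_ok)
qed

lemma PP_trans: "tbound t L U \<Longrightarrow> PP \<in> Ptrans n I m t"
proof -
  assume tb: "tbound t L U"
  obtain x v d where t: "t = (x, v, d)" by (cases t) auto
  show ?thesis
    using tb PP_params le2[OF L_le_PP, of v "omega_of I v x"] le2[OF PP_le_U, of v "omega_of I v x"]
    by (cases d) (auto simp: t tbound_def Ptrans_def)
qed

lemma PP_pR: "\<forall>t\<in>T. tbound t L U \<Longrightarrow> PP \<in> pR n I m R T"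
  using PP_params PP_trans PP_constr by (auto simp: pR_def pT_def)

end

context ctx begin

lemma complete: "psharp n I m R \<pi> \<noteq> None \<Longrightarrow> pR n I m R (set \<pi>) \<noteq> {}"
proof -
  assume "psharp n I m R \<pi> \<noteq> None"
  then obtain L U where e: "psharp n I m R \<pi> = Some (L, U)" by auto
  have inv: "Inv (set \<pi>) (Some (L, U))" using Inv_psharp[of \<pi>] unfolding e .
  then have v: "L \<le> U" "U \<le> ptop n I m" and tb: "\<forall>t\<in>set \<pi>. tbound t L U" and g: "\<forall>r\<in>set R. goodc r L U"
    by (auto simp: Inv_def valid_def)
  interpret cons n I m R L U using v g by unfold_locales auto
  show ?thesis using PP_pR[OF tb] by blast
qed

end

theorem corollary2:
  fixes n :: nat and I :: "(nat \<times> nat) set" and m :: "nat \<Rightarrow> nat"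
    and R :: "constr list" and \<pi> :: "trans list"
  assumes "I \<subseteq> {1..n} \<times> {1..n}"
    and "wellformed I R"
    and "\<forall>t\<in>set \<pi>. is_trans n m t"
  shows "psharp n I m R \<pi> \<noteq> None \<longleftrightarrow> pR n I m R (set \<pi>) \<noteq> {}"
proof -
  interpret ctx n I m R using assms(1,2) by unfold_locales
  show ?thesis using complete psharp_sound by blast
qed

end
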